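(* Let $n,m>3$ be integers and let $\psi$ be an automorphism of $\mathcal{CSR}(m,n)$. Then there is a permutation $\sigma$ of $[m]$ such that for all distinct $a,b\in[m]$, $\psi$ maps the parts of $\mathcal{P}_{ab}$ onto the parts of $\mathcal{P}_{\sigma(a)\sigma(b)}$, i.e. $\psi(\mathcal{P}_{ab})=\mathcal{P}_{\sigma(a)\sigma(b)}$.
   Context: For positive integers $m,n$, the cyclic simplicial rook graph $\mathcal{CSR}(m,n)$ is the graph whose vertices are the vectors $(a_1,\dots,a_m)\in\mathbb{Z}_n^m$ with $a_1+\cdots+a_m\equiv 0 \pmod n$, two vertices being adjacent if and only if their vectors differ in exactly two coordinates. $[m]=\{1,\dots,m\}$; $e_i\in\mathbb{Z}_n^m$ is the vector with $1$ in coordinate $i$ and $0$ elsewhere; for distinct $a,b\in[m]$, $S_{ab}=\{\alpha(e_a-e_b)\mid \alpha\in\mathbb{Z}_n\}$ (note $S_{ab}=S_{ba}$), $x+A=\{x+y\mid y\in A\}$, and $\mathcal{P}_{ab}=\{\xi+S_{ab}\mid \xi \text{ a vertex of } \mathcal{CSR}(m,n)\}$, which is a partition of the vertex set. $\psi(\mathcal{P}_{ab})$ denotes $\{\psi(P)\mid P\in\mathcal{P}_{ab}\}$. *)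

theory Defs
  imports Main
begin

text \<open>Vectors in Z_n^m are modelled as functions nat => nat, with coordinates
  indexed by [m] = {1..m}, entries in {0..<n}, and value 0 outside [m].\<close>

definition zvecs :: "nat \<Rightarrow> nat \<Rightarrow> (nat \<Rightarrow> nat) set" where
  "zvecs m n = {x. (\<forall>i\<in>{1..m}. x i < n) \<and> (\<forall>i. i \<notin> {1..m} \<longrightarrow> x i = 0)}"

definition csr_vertices :: "nat \<Rightarrow> nat \<Rightarrow> (nat \<Rightarrow> nat) set" where
  "csr_vertices m n = {x \<in> zvecs m n. (\<Sum>i\<in>{1..m}. x i) mod n = 0}"

definition csr_adj :: "nat \<Rightarrow> (nat \<Rightarrow> nat) \<Rightarrow> (nat \<Rightarrow> nat) \<Rightarrow> bool" where
  "csr_adj m x y \<longleftrightarrow> card {i \<in> {1..m}. x i \<noteq> y i} = 2"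

definition csr_aut :: "nat \<Rightarrow> nat \<Rightarrow> ((nat \<Rightarrow> nat) \<Rightarrow> (nat \<Rightarrow> nat)) \<Rightarrow> bool" where
  "csr_aut m n \<psi> \<longleftrightarrow> bij_betw \<psi> (csr_vertices m n) (csr_vertices m n) \<and>
     (\<forall>x\<in>csr_vertices m n. \<forall>y\<in>csr_vertices m n. csr_adj m x y \<longleftrightarrow> csr_adj m (\<psi> x) (\<psi> y))"

definition zadd :: "nat \<Rightarrow> (nat \<Rightarrow> nat) \<Rightarrow> (nat \<Rightarrow> nat) \<Rightarrow> (nat \<Rightarrow> nat)" where
  "zadd n x y = (\<lambda>i. (x i + y i) mod n)"

definition zneg :: "nat \<Rightarrow> (nat \<Rightarrow> nat) \<Rightarrow> (nat \<Rightarrow> nat)" where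
  "zneg n x = (\<lambda>i. (n - x i mod n) mod n)"

definition zsmul :: "nat \<Rightarrow> nat \<Rightarrow> (nat \<Rightarrow> nat) \<Rightarrow> (nat \<Rightarrow> nat)" where
  "zsmul n \<alpha> x = (\<lambda>i. (\<alpha> * x i) mod n)"

definition unitvec :: "nat \<Rightarrow> (nat \<Rightarrow> nat)" where
  "unitvec a = (\<lambda>i. if i = a then 1 else 0)"

definition S_set :: "nat \<Rightarrow> nat \<Rightarrow> nat \<Rightarrow> (nat \<Rightarrow> nat) set" where
  "S_set n a b = {zsmul n \<alpha> (zadd n (unitvec a) (zneg n (unitvec b))) | \<alpha>. \<alpha> < n}"

definition coset :: "nat \<Rightarrow> (nat \<Rightarrow> nat) \<Rightarrow> (nat \<Rightarrow> nat) set \<Rightarrow> (nat \<Rightarrow> nat) set" where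
  "coset n x A = {zadd n x y | y. y \<in> A}"

definition P_part :: "nat \<Rightarrow> nat \<Rightarrow> nat \<Rightarrow> nat \<Rightarrow> (nat \<Rightarrow> nat) set set" where
  "P_part m n a b = {coset n \<xi> (S_set n a b) | \<xi>. \<xi> \<in> csr_vertices m n}"

end

theory Submission
  imports Defs "HOL-Number_Theory.Cong"
begin


lemma comb6a:
  fixes a b c d e f :: nat
  assumes "c \<in> {a,b}" "d \<notin> {a,b}" "a\<noteq>b" "c\<noteq>d" "e\<noteq>f" "\<forall>i. i \<notin> {a,b} \<longrightarrow> (i \<in> {c,d} \<longleftrightarrow> i \<in> {e,f})"
      "{a,b} \<subseteq> {c,d} \<union> {e,f}"
  shows "\<exists>p q r. {a,b} = {p,q} \<and> {c,d} = {p,r} \<and> {e,f} = {q,r} \<and> p\<noteq>q \<and> p\<noteq>r \<and> q\<noteq>r"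
proof -
  have "d \<in> {e,f}" using assms by auto
  then obtain g where g: "{e,f} = {d,g}" "g \<noteq> d" using assms by auto
  have "g \<in> {a,b}" using assms g by auto
  then have cg: "{a,b} = {c,g}" "c \<noteq> g" using assms g by auto
  show ?thesis
    apply (rule exI[of _ c], rule exI[of _ g], rule exI[of _ d])
    using cg g assms by auto
qed

lemma comb6:
  fixes a b c d e f :: nat
  assumes "a\<noteq>b" "c\<noteq>d" "e\<noteq>f" and K1: "\<forall>i. i \<notin> {a,b} \<longrightarrow> (i \<in> {c,d} \<longleftrightarrow> i \<in> {e,f})"
   and K2: "{a,b} \<subseteq> {c,d} \<union> {e,f}" and nc: "\<not> ({c,d} \<subseteq> {a,b})"
  shows "\<exists>p q r. {a,b} = {p,q} \<and> {c,d} = {p,r} \<and> {e,f} = {q,r} \<and> p\<noteq>q \<and> p\<noteq>r \<and> q\<noteq>r"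
proof (cases "c \<in> {a,b}")
  case True
  then have "d \<notin> {a,b}" using nc by auto
  from comb6a[OF True this assms(1-5)] show ?thesis .
next
  case False
  show ?thesis
  proof (cases "d \<in> {a,b}")
    case True
    have cd: "{c,d} = {d,c}" by auto
    have h1: "\<forall>i. i \<notin> {a,b} \<longrightarrow> (i \<in> {d,c} \<longleftrightarrow> i \<in> {e,f})" and h2: "{a,b} \<subseteq> {d,c} \<union> {e,f}"
      using K1 K2 unfolding cd by simp_all
    have "d \<noteq> c" using assms(2) by simp
    from comb6a[OF True False assms(1) this assms(3) h1 h2] show ?thesis unfolding cd .
  next
    case F2: False
    have "c \<in> {e,f}" using K1[rule_format, of c] False by simp
    moreover have "d \<in> {e,f}" using K1[rule_format, of d] F2 by simp
    ultimately have "{e,f} = {c,d}" using assms(2,3) by auto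
    then have "a \<in> {c,d}" using K2 by auto
    then show ?thesis using False F2 by simp
  qed
qed

locale csr =
  fixes m n :: nat
  assumes n3: "n > 3" and m3: "m > 3"
begin

abbreviation VV where "VV \<equiv> csr_vertices m n"

definition D :: "(nat \<Rightarrow> nat) \<Rightarrow> (nat \<Rightarrow> nat) \<Rightarrow> nat set" where
  "D x y = {i\<in>{1..m}. x i \<noteq> y i}"

abbreviation adj where "adj x y \<equiv> card (D x y) = 2"

lemma csr_adj_D: "csr_adj m x y \<longleftrightarrow> adj x y"
  by (simp add: csr_adj_def D_def)

lemma D_mem: "i \<in> D x y \<longleftrightarrow> i \<in> {1..m} \<and> x i \<noteq> y i"
  by (simp add: D_def)

lemma D_sym: "D x y = D y x" by (auto simp: D_def)
lemma D_fin: "finite (D x y)" by (simp add: D_def)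
lemma D_sub: "D x y \<subseteq> {1..m}" by (auto simp: D_def)
lemma D_tri: "D x y \<subseteq> D x z \<union> D z y" by (auto simp: D_def)
lemma D_self[simp]: "D x x = {}" by (simp add: D_def)

lemma VV_D: "x \<in> VV \<Longrightarrow> (\<forall>i\<in>{1..m}. x i < n) \<and> (\<forall>i. i \<notin> {1..m} \<longrightarrow> x i = 0) \<and> (\<Sum>i\<in>{1..m}. x i) mod n = 0"
  by (simp add: csr_vertices_def zvecs_def)

lemma VV_lt: "x \<in> VV \<Longrightarrow> i \<in> {1..m} \<Longrightarrow> x i < n"
  using VV_D by blast

lemma VV_out: "x \<in> VV \<Longrightarrow> i \<notin> {1..m} \<Longrightarrow> x i = 0"
  using VV_D by blast

lemma VV_I: "(\<forall>i\<in>{1..m}. x i < n) \<Longrightarrow> (\<forall>i. i \<notin> {1..m} \<longrightarrow> x i = 0) \<Longrightarrow> (\<Sum>i\<in>{1..m}. x i) mod n = 0 \<Longrightarrow> x \<in> VV"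
  by (simp add: csr_vertices_def zvecs_def)

lemma D_empty: "x \<in> VV \<Longrightarrow> y \<in> VV \<Longrightarrow> D x y = {} \<Longrightarrow> x = y"
proof
  fix i assume x: "x \<in> VV" and y: "y \<in> VV" and d: "D x y = {}"
  show "x i = y i"
  proof (cases "i \<in> {1..m}")
    case True then show ?thesis using d by (auto simp: D_def)
  next
    case False then show ?thesis using VV_out[OF x False] VV_out[OF y False] by simp
  qed
qed

lemma sum_split2:
  assumes "a \<in> {1..m}" "b \<in> {1..m}" "a \<noteq> b"
  shows "(\<Sum>i\<in>{1..m}. f i) = f a + f b + (\<Sum>i\<in>{1..m}-{a,b}. f i)"
proof -
  have "(\<Sum>i\<in>{1..m}. f i) = f a + (\<Sum>i\<in>{1..m}-{a}. f i)"
    using assms by (simp add: sum.remove)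
  also have "(\<Sum>i\<in>{1..m}-{a}. f i) = f b + (\<Sum>i\<in>{1..m}-{a}-{b}. f i)"
    using assms by (subst sum.remove[of _ b]) auto
  also have "{1..m}-{a}-{b} = {1..m}-{a,b}" by auto
  finally show ?thesis by (simp add: add.assoc)
qed

lemma sum_lemma:
  assumes x: "x \<in> VV" and y: "y \<in> VV" and ab: "a \<in> {1..m}" "b \<in> {1..m}" "a \<noteq> b"
    and d: "D x y \<subseteq> {a,b}"
  shows "(x a + x b) mod n = (y a + y b) mod n"
proof -
  have R: "(\<Sum>i\<in>{1..m}-{a,b}. x i) = (\<Sum>i\<in>{1..m}-{a,b}. y i)"
    using d by (intro sum.cong) (auto simp: D_def)
  have "(x a + x b + (\<Sum>i\<in>{1..m}-{a,b}. x i)) mod n = (y a + y b + (\<Sum>i\<in>{1..m}-{a,b}. x i)) mod n"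
    using VV_D[OF x] VV_D[OF y] sum_split2[OF ab, of x] sum_split2[OF ab, of y] R by simp
  then have "[x a + x b + (\<Sum>i\<in>{1..m}-{a,b}. x i) = y a + y b + (\<Sum>i\<in>{1..m}-{a,b}. x i)] (mod n)"
    by (simp add: cong_def)
  then have "[x a + x b = y a + y b] (mod n)"
    using cong_add_rcancel_nat by blast
  then show ?thesis by (simp add: cong_def)
qed

lemma det:
  assumes x: "x \<in> VV" and y: "y \<in> VV" and ab: "a \<in> {1..m}" "b \<in> {1..m}" "a \<noteq> b"
    and d: "D x y \<subseteq> {a,b}" and e: "x a = y a"
  shows "x = y"
proof -
  have "(x a + x b) mod n = (y a + y b) mod n" using sum_lemma[OF x y ab d] .
  then have "[x a + x b = x a + y b] (mod n)" using e by (simp add: cong_def)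
  then have "[x b = y b] (mod n)" using cong_add_lcancel_nat by blast
  then have "x b = y b" using VV_lt[OF x ab(2)] VV_lt[OF y ab(2)] by (simp add: cong_def)
  then have "D x y = {}" using d e by (auto simp: D_def)
  then show ?thesis using D_empty x y by blast
qed

lemma det2:
  assumes x: "x \<in> VV" and y: "y \<in> VV" and ab: "a \<in> {1..m}" "b \<in> {1..m}" "a \<noteq> b"
    and d: "D x y \<subseteq> {a,b}" and ne: "x \<noteq> y"
  shows "D x y = {a,b}"
proof -
  have "a \<in> D x y" using det[OF x y ab d] ne ab by (auto simp: D_def)
  moreover have "b \<in> D x y" using det[OF x y ab(2,1) _] ne ab d by (auto simp: D_def insert_commute)
  ultimately show ?thesis using d by auto
qed

lemma ex_adj:
  assumes x: "x \<in> VV" and ac: "a \<in> {1..m}" "c \<in> {1..m}" "a \<noteq> c" and b: "\<beta> < n"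
  shows "\<exists>y\<in>VV. D x y \<subseteq> {a,c} \<and> y c = \<beta>"
proof -
  define y where "y = x(c := \<beta>, a := (x a + x c + (n - \<beta>)) mod n)"
  have n0: "n > 0" using n3 by simp
  have yc: "y c = \<beta>" using ac by (simp add: y_def)
  have ya: "y a = (x a + x c + (n - \<beta>)) mod n" by (simp add: y_def)
  have R: "(\<Sum>i\<in>{1..m}-{a,c}. y i) = (\<Sum>i\<in>{1..m}-{a,c}. x i)"
    by (intro sum.cong) (auto simp: y_def)
  have "(\<Sum>i\<in>{1..m}. y i) mod n = (y a + y c + (\<Sum>i\<in>{1..m}-{a,c}. x i)) mod n"
    using sum_split2[OF ac, of y] R by simp
  also have "\<dots> = (x a + x c + (n - \<beta>) + \<beta> + (\<Sum>i\<in>{1..m}-{a,c}. x i)) mod n"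
    unfolding ya yc by (metis mod_add_left_eq)
  also have "x a + x c + (n - \<beta>) + \<beta> + (\<Sum>i\<in>{1..m}-{a,c}. x i) = (\<Sum>i\<in>{1..m}. x i) + n"
    using sum_split2[OF ac, of x] b by simp
  also have "((\<Sum>i\<in>{1..m}. x i) + n) mod n = 0"
    using VV_D[OF x] by simp
  finally have s: "(\<Sum>i\<in>{1..m}. y i) mod n = 0" .
  have "y \<in> VV"
  proof (rule VV_I)
    show "\<forall>i\<in>{1..m}. y i < n" using VV_lt[OF x] b n0 by (auto simp: y_def)
    show "\<forall>i. i \<notin> {1..m} \<longrightarrow> y i = 0" using VV_out[OF x] ac by (auto simp: y_def)
    show "(\<Sum>i\<in>{1..m}. y i) mod n = 0" by (rule s)
  qed
  moreover have "D x y \<subseteq> {a,c}" by (auto simp: D_def y_def)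
  ultimately show ?thesis using yc by blast
qed

lemma card2E: assumes "card S = 2" obtains a b where "S = {a,b}" "a \<noteq> b"
  using assms by (meson card_2_iff)

lemma tri:
  assumes xy: "adj x y" and xz: "adj x z" and yz: "adj y z"
  shows "(D x z = D x y \<and> D y z = D x y) \<or>
    (\<exists>p q r. D x y = {p,q} \<and> D x z = {p,r} \<and> D y z = {q,r} \<and> p\<noteq>q \<and> p\<noteq>r \<and> q\<noteq>r)"
proof (cases "D x z \<subseteq> D x y")
  case True
  have e1: "D x z = D x y" using card_subset_eq[OF D_fin True] xy xz by simp
  have "D y z \<subseteq> D y x \<union> D x z" by (rule D_tri)
  then have "D y z \<subseteq> D x y" using e1 D_sym by auto
  then have "D y z = D x y" using card_subset_eq[OF D_fin] xy yz by simp
  then show ?thesis using e1 by simp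
next
  case False
  obtain a b where ab: "D x y = {a,b}" "a \<noteq> b" using xy by (rule card2E)
  obtain c d where cd: "D x z = {c,d}" "c \<noteq> d" using xz by (rule card2E)
  obtain e f where ef: "D y z = {e,f}" "e \<noteq> f" using yz by (rule card2E)
  have K1': "\<forall>i. i \<notin> D x y \<longrightarrow> (i \<in> D x z \<longleftrightarrow> i \<in> D y z)" by (auto simp: D_def)
  have K2': "D x y \<subseteq> D x z \<union> D y z" using D_tri[of x y z] D_sym[of z y] by simp
  show ?thesis
    using comb6[OF ab(2) cd(2) ef(2)] K1' K2' False unfolding ab cd ef by blast
qed

lemma no3:
  assumes "i \<in> D x y" "j \<in> D x y" "k \<in> D x y" "i \<noteq> j" "i \<noteq> k" "j \<noteq> k"
  shows "\<not> adj x y"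
proof -
  have "{i,j,k} \<subseteq> D x y" using assms by auto
  then have "card {i,j,k} \<le> card (D x y)" using D_fin by (rule card_mono[rotated])
  moreover have "card {i,j,k} = 3" using assms by simp
  ultimately show ?thesis by simp
qed

lemma D2:
  assumes "adj x y" "i \<in> D x y" "j \<in> D x y" "i \<noteq> j"
  shows "D x y = {i,j}"
proof -
  have "{i,j} \<subseteq> D x y" using assms by auto
  moreover have "card {i,j} = 2" using assms by simp
  ultimately show ?thesis using card_subset_eq[OF D_fin] assms(1) by metis
qed

lemma adjI: "D x y = {i,j} \<Longrightarrow> i \<noteq> j \<Longrightarrow> adj x y" by simp

lemma adj_ne: "adj x y \<Longrightarrow> x \<noteq> y" by auto

definition lineS :: "(nat \<Rightarrow> nat) \<Rightarrow> nat set \<Rightarrow> (nat \<Rightarrow> nat) set" where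
  "lineS x P = {y \<in> VV. \<forall>i\<in>{1..m}. i \<notin> P \<longrightarrow> y i = x i}"

lemma lineS_mem: "y \<in> lineS x P \<longleftrightarrow> y \<in> VV \<and> D x y \<subseteq> P"
  by (auto simp: lineS_def D_def)

lemma lineS_same: "y \<in> lineS x P \<Longrightarrow> lineS y P = lineS x P"
  by (auto simp: lineS_def)

lemma lineS_self: "x \<in> VV \<Longrightarrow> x \<in> lineS x P"
  by (auto simp: lineS_def)

definition clique :: "(nat \<Rightarrow> nat) set \<Rightarrow> bool" where
  "clique K \<longleftrightarrow> K \<subseteq> VV \<and> (\<forall>x\<in>K. \<forall>y\<in>K. x \<noteq> y \<longrightarrow> adj x y)"

definition closed :: "(nat \<Rightarrow> nat) set \<Rightarrow> bool" where
  "closed C \<longleftrightarrow> (\<forall>w\<in>VV. \<forall>u\<in>C. \<forall>v\<in>C. \<forall>p\<in>C. u \<noteq> v \<and> u \<noteq> p \<and> v \<noteq> p \<and>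
      adj w u \<and> adj w v \<and> adj w p \<longrightarrow> w \<in> C)"

definition three :: "(nat \<Rightarrow> nat) set \<Rightarrow> bool" where
  "three C \<longleftrightarrow> (\<exists>u\<in>C. \<exists>v\<in>C. \<exists>p\<in>C. u \<noteq> v \<and> u \<noteq> p \<and> v \<noteq> p)"

definition good :: "(nat \<Rightarrow> nat) set \<Rightarrow> bool" where
  "good C \<longleftrightarrow> clique C \<and> closed C \<and> three C"

lemma maximal:
  assumes K: "clique K" and CK: "C \<subseteq> K" and g: "good C"
  shows "C = K"
proof
  show "K \<subseteq> C"
  proof
    fix k assume k: "k \<in> K"
    show "k \<in> C"
    proof (rule ccontr)
      assume nk: "k \<notin> C"
      obtain u v p where uvp: "u \<in> C" "v \<in> C" "p \<in> C" "u \<noteq> v" "u \<noteq> p" "v \<noteq> p"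
        using g by (auto simp: good_def three_def)
      have "adj k u" "adj k v" "adj k p" using K k CK uvp nk unfolding clique_def by (metis subsetD)+
      moreover have "k \<in> VV" using K k by (auto simp: clique_def)
      ultimately have "k \<in> C" using g uvp unfolding good_def closed_def by blast
      then show False using nk by simp
    qed
  qed
qed (rule CK)

lemma line_pts:
  assumes x: "x \<in> VV" and ab: "a \<in> {1..m}" "b \<in> {1..m}" "a \<noteq> b" and be: "\<beta> < n"
  shows "\<exists>y\<in>lineS x {a,b}. y b = \<beta>"
  using ex_adj[OF x ab be] by (auto simp: lineS_mem)

lemma line_good:
  assumes x: "x \<in> VV" and ab: "a \<in> {1..m}" "b \<in> {1..m}" "a \<noteq> b"
  shows "good (lineS x {a,b})"
proof -
  let ?L = "lineS x {a,b}"
  have inL: "y \<in> ?L \<Longrightarrow> y \<in> VV \<and> D x y \<subseteq> {a,b}" for y by (simp add: lineS_mem)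
  have Dyz: "D y z \<subseteq> {a,b}" if "y \<in> ?L" "z \<in> ?L" for y z
    using D_tri[of y z x] D_sym[of y x] inL[OF that(1)] inL[OF that(2)] by auto
  have eqa: "y = z" if "y \<in> ?L" "z \<in> ?L" "y a = z a" for y z
    using det[of y z a b] ab Dyz[OF that(1,2)] that inL by auto
  have eqb: "y = z" if "y \<in> ?L" "z \<in> ?L" "y b = z b" for y z
  proof -
    have "D y z \<subseteq> {b,a}" using Dyz[OF that(1,2)] by (simp add: insert_commute)
    then show ?thesis using det[of y z b a] ab that inL by auto
  qed
  have cl: "clique ?L"
    unfolding clique_def
  proof (intro conjI ballI impI)
    show "?L \<subseteq> VV" using inL by auto
    fix y z assume yz: "y \<in> ?L" "z \<in> ?L" "y \<noteq> z"
    then have "D y z = {a,b}" using det2[OF _ _ ab Dyz[OF yz(1,2)]] inL by blast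
    then show "adj y z" using ab by simp
  qed
  have th: "three ?L"
  proof -
    obtain y0 where y0: "y0 \<in> ?L" "y0 b = 0" using line_pts[OF x ab, of 0] n3 by auto
    obtain y1 where y1: "y1 \<in> ?L" "y1 b = 1" using line_pts[OF x ab, of 1] n3 by auto
    obtain y2 where y2: "y2 \<in> ?L" "y2 b = 2" using line_pts[OF x ab, of 2] n3 by auto
    have "y0 \<noteq> y1" "y0 \<noteq> y2" "y1 \<noteq> y2" using y0 y1 y2 by auto
    then show ?thesis unfolding three_def using y0 y1 y2 by blast
  qed
  have clo: "closed ?L"
    unfolding closed_def
  proof (intro ballI impI)
    fix w u v p assume w: "w \<in> VV" and uvp: "u \<in> ?L" "v \<in> ?L" "p \<in> ?L"
      and h: "u \<noteq> v \<and> u \<noteq> p \<and> v \<noteq> p \<and> adj w u \<and> adj w v \<and> adj w p"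
    show "w \<in> ?L"
    proof (rule ccontr)
      assume nw: "w \<notin> ?L"
      then obtain r where r: "r \<in> D x w" "r \<notin> {a,b}" using w by (auto simp: lineS_mem)
      have rq: "r \<in> D q w" if "q \<in> ?L" for q
        using r inL[OF that] by (auto simp: D_def)
      have ab_in: "a \<in> D q w" "b \<in> D q w" if "q \<in> ?L" "q a \<noteq> w a" "q b \<noteq> w b" for q
        using that ab by (auto simp: D_def)
      have one: "q a = w a \<or> q b = w b" if "q \<in> ?L" "adj w q" for q
      proof (rule ccontr)
        assume "\<not> (q a = w a \<or> q b = w b)"
        then have "a \<in> D q w" "b \<in> D q w" using ab_in[OF that(1)] by auto
        moreover have "r \<in> D q w" using rq[OF that(1)] .
        ultimately have "\<not> adj q w" using no3[of r q w a b] r ab by auto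
        then show False using that D_sym by metis
      qed
      have "u a = w a \<or> u b = w b" "v a = w a \<or> v b = w b" "p a = w a \<or> p b = w b"
        using one uvp h by auto
      then show False using eqa eqb uvp h by metis
    qed
  qed
  show ?thesis using cl th clo by (simp add: good_def)
qed

lemma Dout: "D x y \<subseteq> S \<Longrightarrow> i \<in> {1..m} \<Longrightarrow> i \<notin> S \<Longrightarrow> x i = y i"
  by (auto simp: D_def)
lemma Din: "i \<in> D x y \<Longrightarrow> x i \<noteq> y i" by (auto simp: D_def)
lemma DinI: "i \<in> {1..m} \<Longrightarrow> x i \<noteq> y i \<Longrightarrow> i \<in> D x y" by (auto simp: D_def)
lemma Dm: "i \<in> D x y \<Longrightarrow> i \<in> {1..m}" by (auto simp: D_def)

lemma avoid: assumes "finite S" "card S < m" shows "\<exists>d\<in>{1..m}. d \<notin> S"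
proof (rule ccontr)
  assume "\<not> ?thesis"
  then have "{1..m} \<subseteq> S" by auto
  then have "card {1..m} \<le> card S" using assms(1) by (rule card_mono[rotated])
  then show False using assms by simp
qed

lemma avoid3: "\<exists>d\<in>{1..m}. d \<notin> {a,b,c}"
proof -
  have "card {a,b,c} \<le> 3" by (simp add: card_insert_le_m1)
  then show ?thesis using avoid[of "{a,b,c}"] m3 by simp
qed

lemma adj_obtain:
  assumes "adj x y" "a \<in> D x y" obtains j where "j \<noteq> a" "D x y = {a,j}"
proof -
  obtain p q where pq: "D x y = {p,q}" "p \<noteq> q" using assms(1) by (rule card2E)
  show ?thesis
  proof (cases "a = p")
    case True then show ?thesis using that[of q] pq by auto
  next
    case False then have "a = q" using assms(2) pq by auto
    then show ?thesis using that[of p] pq by (auto simp: insert_commute)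
  qed
qed

definition star :: "(nat \<Rightarrow> nat) \<Rightarrow> nat \<Rightarrow> nat \<Rightarrow> (nat \<Rightarrow> nat) set" where
  "star x a \<alpha> = insert x {w \<in> VV. adj x w \<and> a \<in> D x w \<and> w a = \<alpha>}"

lemma star_clique:
  assumes x: "x \<in> VV" and a: "a \<in> {1..m}"
  shows "clique (star x a \<alpha>)"
  unfolding clique_def
proof (intro conjI ballI impI)
  show "star x a \<alpha> \<subseteq> VV" using x by (auto simp: star_def)
  fix s s' assume s: "s \<in> star x a \<alpha>" and s': "s' \<in> star x a \<alpha>" and ne: "s \<noteq> s'"
  show "adj s s'"
  proof (cases "s = x")
    case True then show ?thesis using s' ne by (auto simp: star_def)
  next
    case sx: False
    show ?thesis
    proof (cases "s' = x")
      case True then show ?thesis using s sx D_sym by (auto simp: star_def)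
    next
      case s'x: False
      have S: "s \<in> VV" "adj x s" "a \<in> D x s" "s a = \<alpha>" using s sx by (auto simp: star_def)
      have S': "s' \<in> VV" "adj x s'" "a \<in> D x s'" "s' a = \<alpha>" using s' s'x by (auto simp: star_def)
      obtain j where j: "j \<noteq> a" "D x s = {a,j}" using S(2,3) by (rule adj_obtain)
      obtain j' where j': "j' \<noteq> a" "D x s' = {a,j'}" using S'(2,3) by (rule adj_obtain)
      have jm: "j \<in> {1..m}" "j' \<in> {1..m}" using Dm[of j x s] Dm[of j' x s'] j j' by auto
      have sub: "D s s' \<subseteq> {a,j,j'}" using D_tri[of s s' x] D_sym[of s x] j j' by auto
      show ?thesis
      proof (cases "j = j'")
        case True
        have "D s s' \<subseteq> {a,j}" using sub True by auto
        then have "s = s'" using det[of s s' a j] S S' a jm j by auto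
        then show ?thesis using ne by simp
      next
        case False
        have "j \<in> D s s'"
          using Din[of j x s] Dout[of x s' "{a,j'}" j] j j' jm False by (auto intro!: DinI)
        moreover have "j' \<in> D s s'"
          using Din[of j' x s'] Dout[of x s "{a,j}" j'] j j' jm False by (auto intro!: DinI)
        moreover have "a \<notin> D s s'" using S S' by (auto simp: D_def)
        ultimately have "D s s' = {j,j'}" using sub by auto
        then show ?thesis using False by simp
      qed
    qed
  qed
qed

lemma Dpm: "D x y = {p,q} \<Longrightarrow> p \<in> {1..m} \<and> q \<in> {1..m}"
  using D_sub[of x y] by blast

lemma good_sub: "good C \<Longrightarrow> C \<subseteq> VV" by (simp add: good_def clique_def)
lemma good_adj: "good C \<Longrightarrow> x \<in> C \<Longrightarrow> y \<in> C \<Longrightarrow> x \<noteq> y \<Longrightarrow> adj x y"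
  by (simp add: good_def clique_def)
lemma good_closed: "good C \<Longrightarrow> w \<in> VV \<Longrightarrow> u \<in> C \<Longrightarrow> v \<in> C \<Longrightarrow> p \<in> C \<Longrightarrow>
   u \<noteq> v \<Longrightarrow> u \<noteq> p \<Longrightarrow> v \<noteq> p \<Longrightarrow> adj w u \<Longrightarrow> adj w v \<Longrightarrow> adj w p \<Longrightarrow> w \<in> C"
  unfolding good_def closed_def by blast
lemma good_other: assumes "good C" "x \<in> C" obtains u where "u \<in> C" "u \<noteq> x"
  using assms unfolding good_def three_def by metis

lemma classify:
  assumes g: "good C" and xC: "x \<in> C"
  shows "(\<exists>a b. a \<in> {1..m} \<and> b \<in> {1..m} \<and> a \<noteq> b \<and> C = lineS x {a,b}) \<or>
         (\<exists>a \<alpha>. a \<in> {1..m} \<and> \<alpha> < n \<and> \<alpha> \<noteq> x a \<and> C = star x a \<alpha>)"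
proof -
  have CV: "C \<subseteq> VV" using g by (rule good_sub)
  have x: "x \<in> VV" using CV xC by auto
  obtain u where u: "u \<in> C" "u \<noteq> x" using g xC by (rule good_other)
  have xu: "adj x u" using good_adj[OF g xC u(1)] u by simp
  obtain p q where pq: "D x u = {p,q}" "p \<noteq> q" using xu by (rule card2E)
  have pqm: "p \<in> {1..m}" "q \<in> {1..m}" using Dpm[OF pq(1)] by auto
  show ?thesis
  proof (cases "C \<subseteq> lineS x {p,q}")
    case True
    have "C = lineS x {p,q}"
      using maximal[OF _ True g] line_good[OF x pqm pq(2)] by (simp add: good_def)
    then show ?thesis using pqm pq by blast
  next
    case False
    then obtain v where v: "v \<in> C" "v \<notin> lineS x {p,q}" by auto
    have vx: "v \<noteq> x" using v lineS_self[OF x] by auto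
    have vu: "v \<noteq> u" using v u CV pq by (auto simp: lineS_mem)
    have xv: "adj x v" using good_adj[OF g xC v(1)] vx by simp
    have uv: "adj u v" using good_adj[OF g u(1) v(1)] vu by simp
    have "\<not> (D x v = D x u \<and> D u v = D x u)" using v CV pq by (auto simp: lineS_mem)
    then obtain a b r where abr: "D x u = {a,b}" "D x v = {a,r}" "D u v = {b,r}" "a \<noteq> b" "a \<noteq> r" "b \<noteq> r"
      using tri[OF xu xv uv] by blast
    have abrm: "a \<in> {1..m}" "b \<in> {1..m}" "r \<in> {1..m}" using Dpm[OF abr(1)] Dpm[OF abr(2)] by auto
    define \<alpha> where "\<alpha> = u a"
    have uV: "u \<in> VV" "v \<in> VV" using u v CV by auto
    have al: "\<alpha> < n" using VV_lt[OF uV(1) abrm(1)] by (simp add: \<alpha>_def)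
    have axa: "\<alpha> \<noteq> x a" using Din[of a x u] abr by (simp add: \<alpha>_def)
    have va: "v a = \<alpha>" using Dout[of u v "{b,r}" a] abr abrm by (simp add: \<alpha>_def)
    have sub: "C \<subseteq> star x a \<alpha>"
    proof
      fix w assume wC: "w \<in> C"
      have wV: "w \<in> VV" using wC CV by auto
      show "w \<in> star x a \<alpha>"
      proof (cases "w = x \<or> w = u \<or> w = v")
        case True then show ?thesis
          using xu xv uV abr va by (auto simp: star_def \<alpha>_def)
      next
        case False
        then have wne: "w \<noteq> x" "w \<noteq> u" "w \<noteq> v" by auto
        have xw: "adj x w" using good_adj[OF g xC wC] wne by simp
        have uw: "adj u w" using good_adj[OF g u(1) wC] wne by simp
        have vw: "adj v w" using good_adj[OF g v(1) wC] wne by simp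
        show ?thesis
        proof (cases "D x w = D x u \<and> D u w = D x u")
          case True
          have "a \<in> D v w"
            using Din[of a u w] True abr abrm va by (auto simp: \<alpha>_def intro!: DinI)
          moreover have "b \<in> D v w"
            using Din[of b x w] Dout[of x v "{a,r}" b] True abr abrm by (auto intro!: DinI)
          moreover have "r \<in> D v w"
            using Din[of r x v] Dout[of x w "{a,b}" r] True abr abrm by (auto intro!: DinI)
          ultimately have "\<not> adj v w" using no3 abr by metis
          then show ?thesis using vw by simp
        next
          case False
          then obtain a' b' r' where abr': "D x u = {a',b'}" "D x w = {a',r'}" "D u w = {b',r'}"
            "a' \<noteq> b'" "a' \<noteq> r'" "b' \<noteq> r'"
            using tri[OF xu xw uw] by blast
          have "(a' = a \<and> b' = b) \<or> (a' = b \<and> b' = a)" using abr abr' by (metis doubleton_eq_iff)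
          then show ?thesis
          proof
            assume "a' = a \<and> b' = b"
            then have "w a = \<alpha>" using Dout[of u w "{b',r'}" a] abr' abrm by (auto simp: \<alpha>_def)
            then show ?thesis using wV xw abr' \<open>a' = a \<and> b' = b\<close> by (auto simp: star_def)
          next
            assume ab': "a' = b \<and> b' = a"
            have r'm: "r' \<in> {1..m}" using Dpm[OF abr'(2)] by auto
            have wa: "w a = x a" using Dout[of x w "{a',r'}" a] abr' ab' abrm abr by auto
            have a_vw: "a \<in> D v w" using wa va axa abrm by (auto intro!: DinI)
            have b_vw: "b \<in> D v w"
              using Din[of b x w] Dout[of x v "{a,r}" b] abr' ab' abr abrm by (auto intro!: DinI)
            have rr: "r' = r"
            proof (rule ccontr)
              assume "r' \<noteq> r"
              then have "r \<in> D v w"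
                using Din[of r x v] Dout[of x w "{a',r'}" r] abr' ab' abr abrm by (auto intro!: DinI)
              then have "\<not> adj v w" using no3 a_vw b_vw abr by metis
              then show False using vw by simp
            qed
            obtain d where d: "d \<in> {1..m}" "d \<notin> {a,b,r}" using avoid3 by blast
            obtain w' where w': "w' \<in> VV" "D x w' \<subseteq> {d,a}" "w' a = \<alpha>"
              using ex_adj[OF x d(1) abrm(1) _ al] d by auto
            have xw'ne: "x \<noteq> w'" using w' axa by auto
            have Dxw': "D x w' = {d,a}" using det2[OF x w'(1) d(1) abrm(1) _ w'(2) xw'ne] d by auto
            have "adj w' x" using Dxw' d D_sym[of x w'] by auto
            moreover have "adj w' u"
            proof -
              have "D u w' \<subseteq> {a,b,d}" using D_tri[of u w' x] D_sym[of u x] abr Dxw' by auto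
              moreover have "a \<notin> D u w'" using w' by (auto simp: D_def \<alpha>_def)
              moreover have "b \<in> D u w'"
                using Din[of b x u] Dout[of x w' "{d,a}" b] abr Dxw' abrm d by (auto intro!: DinI)
              moreover have "d \<in> D u w'"
                using Din[of d x w'] Dout[of x u "{a,b}" d] abr Dxw' abrm d by (auto intro!: DinI)
              ultimately have "D u w' = {b,d}" by auto
              then show ?thesis using D_sym[of u w'] d by auto
            qed
            moreover have "adj w' v"
            proof -
              have "D v w' \<subseteq> {a,r,d}" using D_tri[of v w' x] D_sym[of v x] abr Dxw' by auto
              moreover have "a \<notin> D v w'" using w' va by (auto simp: D_def)
              moreover have "r \<in> D v w'"
                using Din[of r x v] Dout[of x w' "{d,a}" r] abr Dxw' abrm d by (auto intro!: DinI)
              moreover have "d \<in> D v w'"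
                using Din[of d x w'] Dout[of x v "{a,r}" d] abr Dxw' abrm d by (auto intro!: DinI)
              ultimately have "D v w' = {r,d}" by auto
              then show ?thesis using D_sym[of v w'] d by auto
            qed
            ultimately have w'C: "w' \<in> C"
              using good_closed[OF g w'(1) xC u(1) v(1)] u(2) vx vu by metis
            have "a \<in> D w w'" using wa w' axa abrm by (auto intro!: DinI)
            moreover have "b \<in> D w w'"
              using Din[of b x w] Dout[of x w' "{d,a}" b] abr' ab' abrm d Dxw' by (auto intro!: DinI)
            moreover have "d \<in> D w w'"
              using Din[of d x w'] Dout[of x w "{a',r'}" d] abr' ab' rr Dxw' abrm d by (auto intro!: DinI)
            ultimately have "\<not> adj w w'" using no3 abr d by (metis insertCI)
            moreover have "w \<noteq> w'" using wa w' axa by auto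
            ultimately show ?thesis using good_adj[OF g wC w'C] by simp
          qed
        qed
      qed
    qed
    have "C = star x a \<alpha>" using maximal[OF star_clique[OF x abrm(1)] sub g] .
    then show ?thesis using abrm al axa by blast
  qed
qed

lemma star_pt:
  assumes x: "x \<in> VV" and a: "a \<in> {1..m}" and j: "j \<in> {1..m}" "j \<noteq> a" and al: "\<alpha> < n" "\<alpha> \<noteq> x a"
  shows "\<exists>s\<in>VV. D x s = {a,j} \<and> s a = \<alpha> \<and> s \<in> star x a \<alpha> \<and> s \<noteq> x"
proof -
  obtain s where s: "s \<in> VV" "D x s \<subseteq> {j,a}" "s a = \<alpha>" using ex_adj[OF x j(1) a j(2) al(1)] by blast
  have ne: "x \<noteq> s" using s al by auto
  have "D x s = {j,a}" using det2[OF x s(1) j(1) a j(2) s(2) ne] .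
  then have Ds: "D x s = {a,j}" by auto
  have "s \<in> star x a \<alpha>" using Ds s j by (auto simp: star_def)
  then show ?thesis using Ds s ne by auto
qed

lemma star_noinv:
  assumes x: "x \<in> VV" and a: "a \<in> {1..m}" and al: "\<alpha> < n" "\<alpha> \<noteq> x a"
    and g: "good C'" and xC: "x \<in> C'" and int: "star x a \<alpha> \<inter> C' = {x}"
    and ne: "\<forall>p\<in>star x a \<alpha>. \<forall>q\<in>C'. p \<noteq> x \<longrightarrow> q \<noteq> x \<longrightarrow> \<not> adj p q"
  shows False
proof -
  have CV: "C' \<subseteq> VV" using g by (rule good_sub)
  from classify[OF g xC] show False
  proof (elim disjE exE conjE)
    fix p q assume pq: "p \<in> {1..m}" "q \<in> {1..m}" "p \<noteq> q" and C': "C' = lineS x {p,q}"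
    show False
    proof (cases "a \<in> {p,q}")
      case True
      then obtain j where j: "{p,q} = {a,j}" "j \<noteq> a" using pq by auto
      have jm: "j \<in> {1..m}" using j pq by auto
      obtain s where s: "s \<in> VV" "D x s = {a,j}" "s \<in> star x a \<alpha>" "s \<noteq> x"
        using star_pt[OF x a jm j(2) al] by blast
      have "s \<in> C'" using s j C' by (simp add: lineS_mem)
      then show False using s int by blast
    next
      case False
      obtain s where s: "s \<in> VV" "D x s = {a,p}" "s a = \<alpha>" "s \<in> star x a \<alpha>" "s \<noteq> x"
        using star_pt[OF x a pq(1) _ al] False by auto
      have spx: "s p \<noteq> x p" using Din[of p x s] s by auto
      obtain w where w: "w \<in> VV" "D x w \<subseteq> {q,p}" "w p = s p"
        using ex_adj[OF x pq(2,1) pq(3)[symmetric] VV_lt[OF s(1) pq(1)]] by blast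
      have wx: "x \<noteq> w" using w spx by auto
      have Dxw: "D x w = {q,p}" using det2[OF x w(1) pq(2,1) pq(3)[symmetric] w(2) wx] .
      have wC: "w \<in> C'" using C' w Dxw by (auto simp: lineS_mem)
      have "D s w \<subseteq> {a,p,q}" using D_tri[of s w x] D_sym[of s x] s Dxw by auto
      moreover have "p \<notin> D s w" using w by (auto simp: D_def)
      moreover have "a \<in> D s w"
        using Dout[of x w "{q,p}" a] Dxw s al a False by (auto intro!: DinI)
      moreover have "q \<in> D s w"
        using Din[of q x w] Dout[of x s "{a,p}" q] Dxw s pq False by (auto intro!: DinI)
      ultimately have "D s w = {a,q}" by auto
      then have "adj s w" using False by auto
      then show False using ne s wC wx by auto
    qed
  next
    fix a' \<alpha>' assume a': "a' \<in> {1..m}" "\<alpha>' < n" "\<alpha>' \<noteq> x a'" and C': "C' = star x a' \<alpha>'"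
    show False
    proof (cases "a' = a")
      case True
      obtain j where j: "j \<in> {1..m}" "j \<notin> {a,a,a}" using avoid3 by blast
      show False
      proof (cases "\<alpha>' = \<alpha>")
        case True
        obtain s where s: "s \<in> VV" "s \<in> star x a \<alpha>" "s \<noteq> x"
          using star_pt[OF x a j(1) _ al] j by auto
        then show False using C' True \<open>a' = a\<close> int by auto
      next
        case False
        obtain s where s: "s \<in> VV" "D x s = {a,j}" "s a = \<alpha>" "s \<in> star x a \<alpha>" "s \<noteq> x"
          using star_pt[OF x a j(1) _ al] j by auto
        obtain s' where s': "s' \<in> VV" "D x s' = {a,j}" "s' a = \<alpha>'" "s' \<in> star x a \<alpha>'" "s' \<noteq> x"
          using star_pt[OF x a j(1) _ a'(2)] a'(3) j \<open>a' = a\<close> by auto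
        have "D s s' \<subseteq> {a,j}" using D_tri[of s s' x] D_sym[of s x] s s' by auto
        moreover have "s \<noteq> s'" using s s' False by auto
        ultimately have "D s s' = {a,j}" using det2[OF s(1) s'(1) a j(1)] j by auto
        then have "adj s s'" using j by auto
        then show False using ne s s' C' \<open>a' = a\<close> by auto
      qed
    next
      case False
      obtain s where s: "s \<in> VV" "D x s = {a,a'}" "s \<in> star x a \<alpha>" "s \<noteq> x"
        using star_pt[OF x a a'(1) False al] by blast
      obtain s' where s': "s' \<in> VV" "D x s' = {a',a}" "s' \<in> star x a' \<alpha>'" "s' \<noteq> x"
        using star_pt[OF x a'(1) a _ a'(2,3)] False by auto
      have sub: "D s s' \<subseteq> {a,a'}" using D_tri[of s s' x] D_sym[of s x] s s' by auto
      show False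
      proof (cases "s = s'")
        case True then show False using s s' C' int by auto
      next
        case ne': False
        have "D s s' = {a,a'}" using det2[OF s(1) s'(1) a a'(1) _ sub ne'] False by auto
        then have "adj s s'" using False by auto
        then show False using ne s s' C' by auto
      qed
    qed
  qed
qed

end


lemma dbl1: "{p,r} = {a,d} \<Longrightarrow> a \<in> S \<Longrightarrow> d \<notin> S \<Longrightarrow> r \<notin> S \<Longrightarrow> r = d \<and> p = a"
  by (metis doubleton_eq_iff)
lemma dbl2: "{p,r} = {a,d} \<Longrightarrow> a \<in> S \<Longrightarrow> d \<notin> S \<Longrightarrow> r \<in> S \<Longrightarrow> r = a \<and> p = d"
  by (metis doubleton_eq_iff)
lemma dbl3: "{p,q} \<subseteq> {a,b} \<Longrightarrow> p \<noteq> q \<Longrightarrow> {p,q} = {a,b}"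
  by blast
lemma dbl4: "r \<in> {a,b} \<Longrightarrow> a \<noteq> b \<Longrightarrow> \<exists>c. {a,b} = {r,c} \<and> c \<noteq> r"
  by auto

context csr begin

lemma step1:
  assumes x: "x \<in> VV" and P: "p1 \<in> {1..m}" "p2 \<in> {1..m}" "p1 \<noteq> p2"
    and z: "z \<in> lineS x {p1,p2}" "z \<noteq> x" and w: "w \<in> VV" "adj x w" "adj z w" "w \<notin> lineS x {p1,p2}"
  shows "\<exists>p d. p \<in> {p1,p2} \<and> d \<notin> {p1,p2} \<and> D x w = {p,d}"
proof -
  have zV: "z \<in> VV" using z by (simp add: lineS_mem)
  have Dz: "D x z = {p1,p2}" using det2[OF x zV P] z by (auto simp: lineS_mem)
  obtain e f where ef: "D x w = {e,f}" "e \<noteq> f" using w(2) by (rule card2E)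
  have efm: "e \<in> {1..m}" "f \<in> {1..m}" using Dpm[OF ef(1)] by auto
  have nb: "\<not> (e \<notin> {p1,p2} \<and> f \<notin> {p1,p2})"
  proof
    assume h: "e \<notin> {p1,p2} \<and> f \<notin> {p1,p2}"
    have "p1 \<in> D z w" using Din[of p1 x z] Dout[of x w "{e,f}" p1] Dz ef h P by (auto intro!: DinI)
    moreover have "p2 \<in> D z w" using Din[of p2 x z] Dout[of x w "{e,f}" p2] Dz ef h P by (auto intro!: DinI)
    moreover have "e \<in> D z w" using Din[of e x w] Dout[of x z "{p1,p2}" e] Dz ef h efm by (auto intro!: DinI)
    moreover have "p1 \<noteq> e" "p2 \<noteq> e" using h by auto
    ultimately have "\<not> adj z w" using no3[of p1 z w p2 e] P(3) by blast
    then show False using w by simp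
  qed
  have nb2: "\<not> (e \<in> {p1,p2} \<and> f \<in> {p1,p2})"
  proof
    assume "e \<in> {p1,p2} \<and> f \<in> {p1,p2}"
    then have "D x w \<subseteq> {p1,p2}" using ef by auto
    then show False using w by (simp add: lineS_mem)
  qed
  show ?thesis
  proof (cases "e \<in> {p1,p2}")
    case True
    then have "f \<notin> {p1,p2}" using nb2 by blast
    then show ?thesis using True ef(1) by (intro exI[of _ e] exI[of _ f]) simp
  next
    case False then have "f \<in> {p1,p2}" using nb by blast
    moreover have "D x w = {f,e}" using ef(1) by (simp add: insert_commute)
    ultimately show ?thesis using False by (intro exI[of _ f] exI[of _ e]) simp
  qed
qed

lemma image_move:
  assumes x: "x \<in> VV" and P: "p1 \<in> {1..m}" "p2 \<in> {1..m}" "p1 \<noteq> p2"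
    and Q: "q1 \<in> {1..m}" "q2 \<in> {1..m}" "q1 \<noteq> q2"
    and w1: "w1 \<in> lineS w0 {q1,q2}" "adj x w1" "w1 \<notin> lineS x {p1,p2}"
    and w2: "w2 \<in> lineS w0 {q1,q2}" "adj x w2" "w2 \<notin> lineS x {p1,p2}" and w12: "w1 \<noteq> w2"
    and xM: "x \<notin> lineS w0 {q1,q2}"
    and z1: "z1 \<in> lineS x {p1,p2}" "z1 \<noteq> x" "adj z1 w1"
    and z2: "z2 \<in> lineS x {p1,p2}" "z2 \<noteq> x" "adj z2 w2"
    and F5: "\<forall>w\<in>lineS w0 {q1,q2}. \<exists>z\<in>lineS x {p1,p2}. adj z w"
    and th: "three (lineS w0 {q1,q2})"
  shows "{p1,p2} = {q1,q2}"
proof -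
  let ?L = "lineS x {p1,p2}" and ?M = "lineS w0 {q1,q2}"
  have w1V: "w1 \<in> VV" "w2 \<in> VV" using w1 w2 by (auto simp: lineS_mem)
  have M1: "?M = lineS w1 {q1,q2}" using lineS_same[OF w1(1)] by simp
  have D12s: "D w1 w2 \<subseteq> {q1,q2}" using w2 M1 by (simp add: lineS_mem)
  have D12: "D w1 w2 = {q1,q2}" using det2[OF w1V Q D12s w12] .
  have a12: "adj w1 w2" using D12 Q by simp
  have a1x: "adj w1 x" "adj w2 x" using w1(2) w2(2) D_sym[of w1 x] D_sym[of w2 x] by simp_all
  have "\<not> (D w1 x = D w1 w2 \<and> D w2 x = D w1 w2)"
  proof
    assume "D w1 x = D w1 w2 \<and> D w2 x = D w1 w2"
    then have "x \<in> lineS w1 {q1,q2}" using x D12 by (simp add: lineS_mem)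
    then show False using xM M1 by simp
  qed
  then obtain p q r where pqr: "D w1 w2 = {p,q}" "D w1 x = {p,r}" "D w2 x = {q,r}" "p \<noteq> q" "p \<noteq> r" "q \<noteq> r"
    using tri[OF a12 a1x] by blast
  obtain pp1 d1 where s1: "pp1 \<in> {p1,p2}" "d1 \<notin> {p1,p2}" "D x w1 = {pp1,d1}"
    using step1[OF x P z1(1,2) w1V(1) w1(2) z1(3) w1(3)] by blast
  obtain pp2 d2 where s2: "pp2 \<in> {p1,p2}" "d2 \<notin> {p1,p2}" "D x w2 = {pp2,d2}"
    using step1[OF x P z2(1,2) w1V(2) w2(2) z2(3) w2(3)] by blast
  have e1: "{p,r} = {pp1,d1}" using pqr(2) s1(3) D_sym[of x w1] by simp
  have e2: "{q,r} = {pp2,d2}" using pqr(3) s2(3) D_sym[of x w2] by simp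
  show ?thesis
  proof (cases "r \<in> {p1,p2}")
    case False
    then have "r = d1" "p = pp1" using dbl1[OF e1 s1(1,2)] by auto
    moreover have "r = d2" "q = pp2" using dbl1[OF e2 s2(1,2)] False by auto
    ultimately have "{p,q} \<subseteq> {p1,p2}" using s1 s2 by auto
    then have "{p,q} = {p1,p2}" using pqr(4) by (rule dbl3)
    then show ?thesis using pqr D12 by simp
  next
    case True
    then have pr: "r = pp1" "p = d1" using dbl2[OF e1 s1(1,2)] by auto
    have qr: "r = pp2" "q = d2" using dbl2[OF e2 s2(1,2)] True by auto
    obtain rb where rb: "{p1,p2} = {r,rb}" "rb \<noteq> r" using dbl4[OF True P(3)] by blast
    have rbm: "rb \<in> {1..m}" "r \<in> {1..m}" using rb P by auto
    have pqm: "p \<in> {1..m}" "q \<in> {1..m}" using Dpm[OF pqr(1)] by auto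
    have Q': "{q1,q2} = {p,q}" using D12 pqr by simp
    have pnP: "p \<notin> {p1,p2}" "q \<notin> {p1,p2}" using pr qr s1 s2 by auto
    have w1r: "w1 r \<noteq> x r" using Din[of r w1 x] pqr by auto
    have w1rb: "w1 rb = x rb" using Dout[of w1 x "{p,r}" rb] pqr rb rbm pnP by auto
    have inM: "w r = w1 r \<and> w rb = w1 rb" if "w \<in> ?M" for w
    proof -
      have "w \<in> lineS w1 {q1,q2}" using that M1 by simp
      then have "D w1 w \<subseteq> {p,q}" using Q' by (simp add: lineS_mem)
      then show ?thesis using Dout[of w1 w "{p,q}" r] Dout[of w1 w "{p,q}" rb] rbm pnP rb by auto
    qed
    have key: "w p = x p \<or> w q = x q" if wM: "w \<in> ?M" for w
    proof (rule ccontr)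
      assume h: "\<not> (w p = x p \<or> w q = x q)"
      obtain z where z: "z \<in> ?L" "adj z w" using F5 wM by blast
      have zV: "z \<in> VV" using z by (simp add: lineS_mem)
      have Dz: "D x z \<subseteq> {r,rb}" using z rb by (simp add: lineS_mem)
      show False
      proof (cases "z = x")
        case True
        have wr: "w r \<noteq> x r" using inM[OF wM] w1r by simp
        have "r \<in> D z w" using DinI[OF rbm(2)] wr True by metis
        moreover have "p \<in> D z w" using DinI[OF pqm(1)] h True by metis
        moreover have "q \<in> D z w" using DinI[OF pqm(2)] h True by metis
        ultimately have "r \<in> D z w" "p \<in> D z w" "q \<in> D z w" by simp_all
        moreover have "r \<noteq> p" "r \<noteq> q" "p \<noteq> q" using pqr by auto
        ultimately show False using no3[of r z w p q] z(2) by blast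
      next
        case False
        have Dz2: "D x z = {r,rb}" using det2[OF x zV rbm(2,1) rb(2)[symmetric] Dz] False by auto
        have zrb: "z rb \<noteq> x rb" using Din[of rb x z] Dz2 by auto
        have wrb: "w rb = x rb" using inM[OF wM] w1rb by simp
        have "rb \<in> D z w" using DinI[OF rbm(1)] zrb wrb by metis
        moreover have zp: "z p = x p" "z q = x q" using Dout[of x z "{r,rb}" p] Dout[of x z "{r,rb}" q] Dz2 pqm pnP rb by auto
        moreover have "p \<in> D z w" using DinI[OF pqm(1)] h zp by metis
        moreover have "q \<in> D z w" using DinI[OF pqm(2)] h zp by metis
        moreover have "rb \<noteq> p" "rb \<noteq> q" "p \<noteq> q" using pqr pnP rb by auto
        ultimately show False using no3[of rb z w p q] z(2) by blast
      qed
    qed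
    have eqp: "u = u'" if "u \<in> ?M" "u' \<in> ?M" "u p = u' p" for u u'
    proof -
      have "D u u' \<subseteq> {p,q}" using D_tri[of u u' w0] D_sym[of u w0] that Q' by (auto simp: lineS_mem)
      then show ?thesis using det[of u u' p q] that pqm pqr by (auto simp: lineS_mem)
    qed
    have eqq: "u = u'" if "u \<in> ?M" "u' \<in> ?M" "u q = u' q" for u u'
    proof -
      have "D u u' \<subseteq> {q,p}" using D_tri[of u u' w0] D_sym[of u w0] that Q' by (auto simp: lineS_mem)
      then show ?thesis using det[of u u' q p] that pqm pqr by (auto simp: lineS_mem)
    qed
    obtain u1 u2 u3 where u: "u1 \<in> ?M" "u2 \<in> ?M" "u3 \<in> ?M" "u1 \<noteq> u2" "u1 \<noteq> u3" "u2 \<noteq> u3"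
      using th unfolding three_def by blast
    have "u1 p = x p \<or> u1 q = x q" "u2 p = x p \<or> u2 q = x q" "u3 p = x p \<or> u3 q = x q"
      using key u by auto
    then show ?thesis using eqp[OF u(1) u(2)] eqp[OF u(1) u(3)] eqp[OF u(2) u(3)]
      eqq[OF u(1) u(2)] eqq[OF u(1) u(3)] eqq[OF u(2) u(3)] u(4-6) by auto
  qed
qed

end

locale csr_aut_l = csr +
  fixes \<psi> :: "(nat \<Rightarrow> nat) \<Rightarrow> (nat \<Rightarrow> nat)"
  assumes aut: "csr_aut m n \<psi>"
begin

lemma bij: "bij_betw \<psi> VV VV" using aut by (simp add: csr_aut_def)
lemma inj: "inj_on \<psi> VV" using bij by (simp add: bij_betw_def)
lemma img: "\<psi> ` VV = VV" using bij by (simp add: bij_betw_def)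
lemma psiV: "x \<in> VV \<Longrightarrow> \<psi> x \<in> VV" using img by auto
lemma adjp: "x \<in> VV \<Longrightarrow> y \<in> VV \<Longrightarrow> adj (\<psi> x) (\<psi> y) \<longleftrightarrow> adj x y"
  using aut by (simp add: csr_aut_def csr_adj_D)
lemma surjV: "w \<in> VV \<Longrightarrow> \<exists>w0\<in>VV. w = \<psi> w0" using img by auto
lemma inj_eq: "x \<in> VV \<Longrightarrow> y \<in> VV \<Longrightarrow> \<psi> x = \<psi> y \<longleftrightarrow> x = y" using inj by (auto dest: inj_onD)

lemma transport:
  assumes g: "good C"
  shows "good (\<psi> ` C)"
proof -
  have CV: "C \<subseteq> VV" using g by (rule good_sub)
  have cl: "clique (\<psi> ` C)"
    unfolding clique_def
  proof (intro conjI ballI impI)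
    show "\<psi> ` C \<subseteq> VV" using CV psiV by auto
    fix p q assume "p \<in> \<psi> ` C" "q \<in> \<psi> ` C" "p \<noteq> q"
    then obtain p0 q0 where "p0 \<in> C" "q0 \<in> C" "p = \<psi> p0" "q = \<psi> q0" "p0 \<noteq> q0" by auto
    then show "adj p q" using good_adj[OF g] adjp CV by (metis subsetD)
  qed
  have th: "three (\<psi> ` C)"
  proof -
    obtain u v p where "u \<in> C" "v \<in> C" "p \<in> C" "u \<noteq> v" "u \<noteq> p" "v \<noteq> p"
      using g by (auto simp: good_def three_def)
    then have "\<psi> u \<in> \<psi> ` C" "\<psi> v \<in> \<psi> ` C" "\<psi> p \<in> \<psi> ` C" "\<psi> u \<noteq> \<psi> v" "\<psi> u \<noteq> \<psi> p" "\<psi> v \<noteq> \<psi> p"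
      using inj_eq CV by (auto simp del: inj_eq)
    then show ?thesis unfolding three_def by blast
  qed
  have clo: "closed (\<psi> ` C)"
    unfolding closed_def
  proof (intro ballI impI)
    fix w u v p assume w: "w \<in> VV" and uvp: "u \<in> \<psi> ` C" "v \<in> \<psi> ` C" "p \<in> \<psi> ` C"
      and h: "u \<noteq> v \<and> u \<noteq> p \<and> v \<noteq> p \<and> adj w u \<and> adj w v \<and> adj w p"
    obtain w0 where w0: "w0 \<in> VV" "w = \<psi> w0" using surjV[OF w] by blast
    obtain u0 v0 p0 where 0: "u0 \<in> C" "v0 \<in> C" "p0 \<in> C" "u = \<psi> u0" "v = \<psi> v0" "p = \<psi> p0"
      using uvp by auto
    have "u0 \<noteq> v0" "u0 \<noteq> p0" "v0 \<noteq> p0" using h 0 by auto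
    moreover have "adj w0 u0" "adj w0 v0" "adj w0 p0" using h 0 w0 adjp CV by auto
    ultimately have "w0 \<in> C" using good_closed[OF g w0(1) 0(1,2,3)] by blast
    then show "w \<in> \<psi> ` C" using w0 by auto
  qed
  show ?thesis using cl th clo by (simp add: good_def)
qed

lemma lineA:
  assumes x: "x \<in> VV" and ab: "a \<in> {1..m}" "b \<in> {1..m}" "a \<noteq> b"
  shows "\<exists>p q. p \<in> {1..m} \<and> q \<in> {1..m} \<and> p \<noteq> q \<and> \<psi> ` lineS x {a,b} = lineS (\<psi> x) {p,q}"
proof -
  let ?L = "lineS x {a,b}"
  have gL: "good (\<psi> ` ?L)" using transport[OF line_good[OF x ab]] .
  have xL: "\<psi> x \<in> \<psi> ` ?L" using lineS_self[OF x] by auto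
  from classify[OF gL xL] show ?thesis
  proof (elim disjE exE conjE)
    fix p q assume "p \<in> {1..m}" "q \<in> {1..m}" "p \<noteq> q" "\<psi> ` ?L = lineS (\<psi> x) {p,q}"
    then show ?thesis by blast
  next
    fix a' \<alpha> assume a': "a' \<in> {1..m}" "\<alpha> < n" "\<alpha> \<noteq> \<psi> x a'" and C: "\<psi> ` ?L = star (\<psi> x) a' \<alpha>"
    obtain c where c: "c \<in> {1..m}" "c \<notin> {a,b,b}" using avoid3 by blast
    obtain d where d: "d \<in> {1..m}" "d \<notin> {a,b,c}" using avoid3 by blast
    let ?M = "lineS x {c,d}"
    have cd: "c \<noteq> d" using c d by auto
    have gM: "good (\<psi> ` ?M)" using transport[OF line_good[OF x c(1) d(1) cd]] .
    have xM: "\<psi> x \<in> \<psi> ` ?M" using lineS_self[OF x] by auto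
    have LV: "?L \<subseteq> VV" "?M \<subseteq> VV" by (auto simp: lineS_mem)
    have LM: "?L \<inter> ?M = {x}"
    proof
      show "?L \<inter> ?M \<subseteq> {x}"
      proof
        fix y assume y: "y \<in> ?L \<inter> ?M"
        have "D x y = {}" using y c d by (auto simp: lineS_mem)
        then show "y \<in> {x}" using D_empty[OF x] y by (auto simp: lineS_mem)
      qed
      show "{x} \<subseteq> ?L \<inter> ?M" using lineS_self[OF x] by auto
    qed
    have int: "\<psi> ` ?L \<inter> \<psi> ` ?M = {\<psi> x}"
    proof -
      have "\<psi> ` ?L \<inter> \<psi> ` ?M = \<psi> ` (?L \<inter> ?M)"
        using inj LV by (simp add: inj_on_image_Int)
      then show ?thesis using LM by simp
    qed
    have noe: "\<forall>p\<in>\<psi> ` ?L. \<forall>q\<in>\<psi> ` ?M. p \<noteq> \<psi> x \<longrightarrow> q \<noteq> \<psi> x \<longrightarrow> \<not> adj p q"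
    proof (intro ballI impI)
      fix p q assume "p \<in> \<psi> ` ?L" "q \<in> \<psi> ` ?M" "p \<noteq> \<psi> x" "q \<noteq> \<psi> x"
      then obtain p0 q0 where pq0: "p0 \<in> ?L" "q0 \<in> ?M" "p = \<psi> p0" "q = \<psi> q0" "p0 \<noteq> x" "q0 \<noteq> x" by auto
      have p0V: "p0 \<in> VV" "q0 \<in> VV" using pq0 by (auto simp: lineS_mem)
      have Dp: "D x p0 = {a,b}" using det2[OF x p0V(1) ab] pq0 by (auto simp: lineS_mem)
      have Dq: "D x q0 = {c,d}" using det2[OF x p0V(2) c(1) d(1) cd] pq0 by (auto simp: lineS_mem)
      have "a \<in> D p0 q0"
        using Din[of a x p0] Dout[of x q0 "{c,d}" a] Dp Dq ab c d by (auto intro!: DinI)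
      moreover have "b \<in> D p0 q0"
        using Din[of b x p0] Dout[of x q0 "{c,d}" b] Dp Dq ab c d by (auto intro!: DinI)
      moreover have "c \<in> D p0 q0"
        using Din[of c x q0] Dout[of x p0 "{a,b}" c] Dp Dq ab c d by (auto intro!: DinI)
      ultimately have "\<not> adj p0 q0" using no3 ab c by (metis insertCI)
      then show "\<not> adj p q" using pq0 p0V adjp by simp
    qed
    show ?thesis using star_noinv[OF psiV[OF x] a' gM xM] int noe C by simp
  qed
qed

end


context csr begin

definition ee :: "(nat \<Rightarrow> nat) \<Rightarrow> nat \<Rightarrow> nat \<Rightarrow> nat \<Rightarrow> (nat \<Rightarrow> nat)" where
  "ee \<xi> a b \<alpha> = zadd n \<xi> (zsmul n \<alpha> (zadd n (unitvec a) (zneg n (unitvec b))))"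

lemma ee_vals:
  assumes "a \<noteq> b"
  shows "ee \<xi> a b \<alpha> a = (\<xi> a + \<alpha>) mod n"
    "ee \<xi> a b \<alpha> b = (\<xi> b + \<alpha> * (n - 1)) mod n"
    "i \<noteq> a \<Longrightarrow> i \<noteq> b \<Longrightarrow> ee \<xi> a b \<alpha> i = \<xi> i mod n"
proof -
  have n1: "n > 1" using n3 by simp
  have sn: "Suc n mod n = 1" using n1 by (simp add: mod_Suc)
  show "ee \<xi> a b \<alpha> a = (\<xi> a + \<alpha>) mod n"
    using assms n1 sn by (simp add: ee_def zadd_def zsmul_def zneg_def unitvec_def mod_add_right_eq)
  show "ee \<xi> a b \<alpha> b = (\<xi> b + \<alpha> * (n - 1)) mod n"
    using assms n1 by (simp add: ee_def zadd_def zsmul_def zneg_def unitvec_def mod_add_right_eq)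
  show "i \<noteq> a \<Longrightarrow> i \<noteq> b \<Longrightarrow> ee \<xi> a b \<alpha> i = \<xi> i mod n"
    using n1 by (simp add: ee_def zadd_def zsmul_def zneg_def unitvec_def)
qed

lemma coset_line:
  assumes xi: "\<xi> \<in> VV" and ab: "a \<in> {1..m}" "b \<in> {1..m}" "a \<noteq> b"
  shows "coset n \<xi> (S_set n a b) = lineS \<xi> {a,b}"
proof -
  have n0: "n > 0" using n3 by simp
  have cs: "coset n \<xi> (S_set n a b) = {ee \<xi> a b \<alpha> | \<alpha>. \<alpha> < n}"
    by (auto simp: coset_def S_set_def ee_def)
  have off: "ee \<xi> a b \<alpha> i = \<xi> i" if "i \<notin> {a,b}" for i \<alpha>
  proof (cases "i \<in> {1..m}")
    case True then show ?thesis using ee_vals(3)[OF ab(3)] that VV_lt[OF xi] by simp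
  next
    case False then show ?thesis using ee_vals(3)[OF ab(3)] that VV_out[OF xi] by simp
  qed
  have sub1: "ee \<xi> a b \<alpha> \<in> lineS \<xi> {a,b}" for \<alpha>
  proof -
    let ?e = "ee \<xi> a b \<alpha>"
    have R: "(\<Sum>i\<in>{1..m}-{a,b}. ?e i) = (\<Sum>i\<in>{1..m}-{a,b}. \<xi> i)"
      using off by (intro sum.cong) auto
    have c1: "[?e a = \<xi> a + \<alpha>] (mod n)" using ee_vals(1)[OF ab(3)] by (simp add: cong_def)
    have c2: "[?e b = \<xi> b + \<alpha> * (n - 1)] (mod n)" using ee_vals(2)[OF ab(3)] by (simp add: cong_def)
    have eq: "\<xi> a + \<alpha> + (\<xi> b + \<alpha> * (n - 1)) = \<xi> a + \<xi> b + \<alpha> * n"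
      using n0 by (cases n) (simp_all add: algebra_simps)
    have c3: "[\<xi> a + \<xi> b + \<alpha> * n = \<xi> a + \<xi> b] (mod n)" by (simp add: cong_def)
    have "[?e a + ?e b = \<xi> a + \<xi> b] (mod n)"
      using cong_add[OF c1 c2] c3 eq by (metis cong_trans)
    then have "[?e a + ?e b + (\<Sum>i\<in>{1..m}-{a,b}. \<xi> i) = \<xi> a + \<xi> b + (\<Sum>i\<in>{1..m}-{a,b}. \<xi> i)] (mod n)"
      using cong_add_rcancel_nat by blast
    then have "(\<Sum>i\<in>{1..m}. ?e i) mod n = (\<Sum>i\<in>{1..m}. \<xi> i) mod n"
      using sum_split2[OF ab, of ?e] sum_split2[OF ab, of \<xi>] R by (simp add: cong_def)
    then have s: "(\<Sum>i\<in>{1..m}. ?e i) mod n = 0" using VV_D[OF xi] by simp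
    have "?e \<in> VV"
    proof (rule VV_I)
      show "\<forall>i\<in>{1..m}. ?e i < n"
      proof
        fix i assume i: "i \<in> {1..m}"
        show "?e i < n"
        proof (cases "i \<in> {a,b}")
          case True then show ?thesis using ee_vals[OF ab(3)] n0 by auto
        next
          case False then show ?thesis using off VV_lt[OF xi i] by simp
        qed
      qed
      show "\<forall>i. i \<notin> {1..m} \<longrightarrow> ?e i = 0" using off VV_out[OF xi] ab by auto
      show "(\<Sum>i\<in>{1..m}. ?e i) mod n = 0" by (rule s)
    qed
    then show ?thesis using off by (auto simp: lineS_def)
  qed
  have sub2: "y \<in> {ee \<xi> a b \<alpha> | \<alpha>. \<alpha> < n}" if y: "y \<in> lineS \<xi> {a,b}" for y
  proof -
    have yV: "y \<in> VV" and Dy: "D \<xi> y \<subseteq> {a,b}" using y by (auto simp: lineS_mem)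
    define \<alpha> where "\<alpha> = (y a + (n - \<xi> a)) mod n"
    have al: "\<alpha> < n" using n0 by (simp add: \<alpha>_def)
    have xa: "\<xi> a < n" "y a < n" "y b < n" using VV_lt[OF xi ab(1)] VV_lt[OF yV ab(1)] VV_lt[OF yV ab(2)] by auto
    have ea: "ee \<xi> a b \<alpha> a = y a"
    proof -
      have "ee \<xi> a b \<alpha> a = (\<xi> a + (y a + (n - \<xi> a))) mod n"
        using ee_vals(1)[OF ab(3)] by (simp add: \<alpha>_def mod_add_right_eq)
      also have "\<xi> a + (y a + (n - \<xi> a)) = y a + n" using xa by simp
      finally show ?thesis using xa by simp
    qed
    have eb: "ee \<xi> a b \<alpha> b = y b"
    proof -
      have sl: "[\<xi> a + \<xi> b = y a + y b] (mod n)" using sum_lemma[OF xi yV ab Dy] by (simp add: cong_def)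
      have k1: "[\<xi> b + \<alpha> * (n - 1) + \<alpha> = \<xi> b] (mod n)"
      proof -
        have e: "\<xi> b + \<alpha> * (n - 1) + \<alpha> = \<xi> b + \<alpha> * n" using n0 by (cases n) (simp_all add: algebra_simps)
        show ?thesis unfolding cong_def e by simp
      qed
      have k2: "[y b + \<alpha> = \<xi> b] (mod n)"
      proof -
        have "[y b + \<alpha> = y b + (y a + (n - \<xi> a))] (mod n)" by (simp add: cong_def \<alpha>_def mod_add_right_eq)
        moreover have "y b + (y a + (n - \<xi> a)) = (y a + y b) + (n - \<xi> a)" by simp
        moreover have "[(y a + y b) + (n - \<xi> a) = (\<xi> a + \<xi> b) + (n - \<xi> a)] (mod n)"
          using sl by (simp add: cong_add cong_sym)
        moreover have "(\<xi> a + \<xi> b) + (n - \<xi> a) = \<xi> b + n" using xa by simp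
        moreover have "[\<xi> b + n = \<xi> b] (mod n)" by (simp add: cong_def)
        ultimately show ?thesis by (metis cong_trans)
      qed
      have "[\<xi> b + \<alpha> * (n - 1) + \<alpha> = y b + \<alpha>] (mod n)" using k1 k2 by (metis cong_sym cong_trans)
      then have "[\<xi> b + \<alpha> * (n - 1) = y b] (mod n)" using cong_add_rcancel_nat by blast
      then show ?thesis using ee_vals(2)[OF ab(3)] xa by (simp add: cong_def)
    qed
    have "y = ee \<xi> a b \<alpha>"
    proof
      fix i show "y i = ee \<xi> a b \<alpha> i"
      proof (cases "i \<in> {a,b}")
        case True then show ?thesis using ea eb by auto
      next
        case False
        then have "ee \<xi> a b \<alpha> i = \<xi> i" by (rule off)
        moreover have "y i = \<xi> i"
        proof (cases "i \<in> {1..m}")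
          case True then show ?thesis using y False by (auto simp: lineS_def)
        next
          case F2: False then show ?thesis using VV_out[OF xi F2] VV_out[OF yV F2] by simp
        qed
        ultimately show ?thesis by simp
      qed
    qed
    then show ?thesis using al by blast
  qed
  show ?thesis unfolding cs using sub1 sub2 by blast
qed

lemma P_part_eq:
  assumes ab: "a \<in> {1..m}" "b \<in> {1..m}" "a \<noteq> b"
  shows "P_part m n a b = (\<lambda>\<xi>. lineS \<xi> {a,b}) ` VV"
  using coset_line[OF _ ab] by (auto simp: P_part_def)

end

context csr_aut_l begin

lemma mem_img: "x \<in> VV \<Longrightarrow> S \<subseteq> VV \<Longrightarrow> \<psi> x \<in> \<psi> ` S \<longleftrightarrow> x \<in> S"
  using inj by (meson inj_on_image_mem_iff)

lemma move_psi:
  assumes xi: "\<xi> \<in> VV" and abc: "a \<in> {1..m}" "b \<in> {1..m}" "c \<in> {1..m}" "a \<noteq> b" "a \<noteq> c" "b \<noteq> c"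
    and xi': "\<xi>' \<in> VV" "D \<xi> \<xi>' \<subseteq> {a,c}" "\<xi>' c \<noteq> \<xi> c"
    and P: "p1 \<in> {1..m}" "p2 \<in> {1..m}" "p1 \<noteq> p2" "\<psi> ` lineS \<xi> {a,b} = lineS (\<psi> \<xi>) {p1,p2}"
    and Q: "q1 \<in> {1..m}" "q2 \<in> {1..m}" "q1 \<noteq> q2" "\<psi> ` lineS \<xi>' {a,b} = lineS (\<psi> \<xi>') {q1,q2}"
  shows "{p1,p2} = {q1,q2}"
proof -
  let ?L = "lineS \<xi> {a,b}" and ?M = "lineS \<xi>' {a,b}"
  have LV: "?L \<subseteq> VV" "?M \<subseteq> VV" by (auto simp: lineS_mem)
  have ne0: "\<xi> \<noteq> \<xi>'" using xi' by auto
  have D0: "D \<xi> \<xi>' = {a,c}" using det2[OF xi xi'(1) abc(1,3,5) xi'(2) ne0] .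
  have xa: "\<xi>' a \<noteq> \<xi> a" using Din[of a \<xi> \<xi>'] D0 by auto
  obtain y2 where y2: "y2 \<in> VV" "D \<xi> y2 \<subseteq> {b,c}" "y2 c = \<xi>' c"
    using ex_adj[OF xi abc(2,3,6) VV_lt[OF xi'(1) abc(3)]] by blast
  have ne2: "\<xi> \<noteq> y2" using y2 xi' by auto
  have D2: "D \<xi> y2 = {b,c}" using det2[OF xi y2(1) abc(2,3,6) y2(2) ne2] .
  have y2a: "y2 a = \<xi> a" using Dout[of \<xi> y2 "{b,c}" a] D2 abc by auto
  have y2M: "y2 \<in> ?M"
  proof -
    have "D \<xi>' y2 \<subseteq> {a,b,c}" using D_tri[of \<xi>' y2 \<xi>] D_sym[of \<xi>' \<xi>] D0 D2 by auto
    moreover have "c \<notin> D \<xi>' y2" using y2 by (auto simp: D_def)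
    ultimately show ?thesis using y2 by (auto simp: lineS_mem)
  qed
  have xi'M: "\<xi>' \<in> ?M" using lineS_self[OF xi'(1)] .
  have w12: "\<psi> \<xi>' \<noteq> \<psi> y2" using inj_eq[OF xi'(1) y2(1)] xa y2a by auto
  have xiM: "\<xi> \<notin> ?M" using Din[of c \<xi> \<xi>'] D0 abc D_sym[of \<xi>' \<xi>] by (auto simp: lineS_mem)
  have xi'L: "\<xi>' \<notin> ?L" using D0 abc by (auto simp: lineS_mem)
  have y2L: "y2 \<notin> ?L" using D2 abc by (auto simp: lineS_mem)
  have vc: "v c = \<xi>' c" if "v \<in> ?M" for v
    using Dout[of \<xi>' v "{a,b}" c] that abc by (auto simp: lineS_mem)
  have zb: "\<exists>z\<in>?L. adj z v \<and> z a = v a" if vM: "v \<in> ?M" for v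
  proof -
    have vV: "v \<in> VV" using vM by (simp add: lineS_mem)
    obtain z where z: "z \<in> VV" "D v z \<subseteq> {b,c}" "z c = \<xi> c"
      using ex_adj[OF vV abc(2,3,6) VV_lt[OF xi abc(3)]] by blast
    have nz: "v \<noteq> z" using z vc[OF vM] xi' by auto
    have Dz: "D v z = {b,c}" using det2[OF vV z(1) abc(2,3,6) z(2) nz] .
    have "D \<xi> z \<subseteq> {a,b,c}"
      using D_tri[of \<xi> z v] D_tri[of \<xi> v \<xi>'] D0 Dz vM by (auto simp: lineS_mem)
    moreover have "c \<notin> D \<xi> z" using z by (auto simp: D_def)
    ultimately have "z \<in> ?L" using z by (auto simp: lineS_mem)
    moreover have "adj z v" using Dz D_sym[of z v] abc by auto
    moreover have "z a = v a" using Dout[of v z "{b,c}" a] Dz abc by auto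
    ultimately show ?thesis by blast
  qed
  obtain z1 where z1: "z1 \<in> ?L" "adj z1 \<xi>'" "z1 a = \<xi>' a" using zb[OF xi'M] by blast
  have z1x: "z1 \<noteq> \<xi>" using z1 xa by auto
  obtain z2 where z2: "z2 \<in> VV" "D y2 z2 \<subseteq> {a,c}" "z2 c = \<xi> c"
    using ex_adj[OF y2(1) abc(1,3,5) VV_lt[OF xi abc(3)]] by blast
  have nz2: "y2 \<noteq> z2" using z2 y2 xi' by auto
  have Dz2: "D y2 z2 = {a,c}" using det2[OF y2(1) z2(1) abc(1,3,5) z2(2) nz2] .
  have z2L: "z2 \<in> ?L"
  proof -
    have "D \<xi> z2 \<subseteq> {a,b,c}" using D_tri[of \<xi> z2 y2] D2 Dz2 by auto
    moreover have "c \<notin> D \<xi> z2" using z2 by (auto simp: D_def)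
    ultimately show ?thesis using z2 by (auto simp: lineS_mem)
  qed
  have z2x: "z2 \<noteq> \<xi>" using Din[of a y2 z2] Dz2 y2a by auto
  have az2: "adj z2 y2" using Dz2 D_sym[of z2 y2] abc by auto
  have z1V: "z1 \<in> VV" using z1 by (simp add: lineS_mem)
  have gM: "good (\<psi> ` ?M)" using transport[OF line_good[OF xi'(1) abc(1,2,4)]] .
  show ?thesis
  proof (rule image_move[OF psiV[OF xi] P(1-3) Q(1-3)])
    show "\<psi> \<xi>' \<in> lineS (\<psi> \<xi>') {q1,q2}" using Q(4) xi'M by auto
    show "\<psi> y2 \<in> lineS (\<psi> \<xi>') {q1,q2}" using Q(4) y2M by auto
    show "adj (\<psi> \<xi>) (\<psi> \<xi>')" using adjp[OF xi xi'(1)] D0 abc by simp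
    show "adj (\<psi> \<xi>) (\<psi> y2)" using adjp[OF xi y2(1)] D2 abc by simp
    show "\<psi> \<xi>' \<notin> lineS (\<psi> \<xi>) {p1,p2}" using P(4) mem_img[OF xi'(1) LV(1)] xi'L by simp
    show "\<psi> y2 \<notin> lineS (\<psi> \<xi>) {p1,p2}" using P(4) mem_img[OF y2(1) LV(1)] y2L by simp
    show "\<psi> \<xi>' \<noteq> \<psi> y2" by (rule w12)
    show "\<psi> \<xi> \<notin> lineS (\<psi> \<xi>') {q1,q2}" using Q(4) mem_img[OF xi LV(2)] xiM by simp
    show "\<psi> z1 \<in> lineS (\<psi> \<xi>) {p1,p2}" using P(4) z1 by auto
    show "\<psi> z1 \<noteq> \<psi> \<xi>" using inj_eq[OF z1V xi] z1x by simp
    show "adj (\<psi> z1) (\<psi> \<xi>')" using adjp[OF z1V xi'(1)] z1 by simp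
    show "\<psi> z2 \<in> lineS (\<psi> \<xi>) {p1,p2}" using P(4) z2L by auto
    show "\<psi> z2 \<noteq> \<psi> \<xi>" using inj_eq[OF z2(1) xi] z2x by simp
    show "adj (\<psi> z2) (\<psi> y2)" using adjp[OF z2(1) y2(1)] az2 by simp
    show "\<forall>w\<in>lineS (\<psi> \<xi>') {q1,q2}. \<exists>z\<in>lineS (\<psi> \<xi>) {p1,p2}. adj z w"
    proof
      fix w assume "w \<in> lineS (\<psi> \<xi>') {q1,q2}"
      then obtain v where v: "v \<in> ?M" "w = \<psi> v" using Q(4) by auto
      obtain z where z: "z \<in> ?L" "adj z v" using zb[OF v(1)] by blast
      have "adj (\<psi> z) w" using adjp[of z v] z v LV by auto
      moreover have "\<psi> z \<in> lineS (\<psi> \<xi>) {p1,p2}" using P(4) z by auto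
      ultimately show "\<exists>z\<in>lineS (\<psi> \<xi>) {p1,p2}. adj z w" by blast
    qed
    show "three (lineS (\<psi> \<xi>') {q1,q2})" using gM Q(4) by (simp add: good_def)
  qed
qed

definition z0 :: "nat \<Rightarrow> nat" where "z0 = (\<lambda>_. 0)"

lemma z0V: "z0 \<in> VV"
  using n3 by (intro VV_I) (auto simp: z0_def)

lemma const:
  assumes ab: "a \<in> {1..m}" "b \<in> {1..m}" "a \<noteq> b"
    and G: "g1 \<in> {1..m}" "g2 \<in> {1..m}" "g1 \<noteq> g2" "\<psi> ` lineS z0 {a,b} = lineS (\<psi> z0) {g1,g2}"
  shows "\<xi> \<in> VV \<Longrightarrow> \<psi> ` lineS \<xi> {a,b} = lineS (\<psi> \<xi>) {g1,g2}"
proof (induction "\<Sum>i\<in>{1..m}-{a,b}. \<xi> i" arbitrary: \<xi>)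
  case 0
  have "\<forall>i\<in>{1..m}-{a,b}. \<xi> i = 0" using 0(1)[symmetric] by simp
  then have "lineS \<xi> {a,b} = lineS z0 {a,b}" by (auto simp: lineS_def z0_def)
  then have e: "\<psi> ` lineS \<xi> {a,b} = lineS (\<psi> z0) {g1,g2}" using G(4) by simp
  then have "\<psi> \<xi> \<in> lineS (\<psi> z0) {g1,g2}" using lineS_self[OF 0(2)] by (metis imageI)
  then show ?case using e lineS_same by metis
next
  case (Suc k)
  have "\<exists>c\<in>{1..m}-{a,b}. \<xi> c > 0"
  proof (rule ccontr)
    assume "\<not> ?thesis"
    then have "(\<Sum>i\<in>{1..m}-{a,b}. \<xi> i) = 0" by auto
    then show False using Suc(2) by simp
  qed
  then obtain c where c: "c \<in> {1..m}" "c \<notin> {a,b}" "\<xi> c > 0" by blast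
  have cV: "\<xi> c - 1 < n" using VV_lt[OF Suc(3) c(1)] by simp
  obtain \<xi>' where xi': "\<xi>' \<in> VV" "D \<xi> \<xi>' \<subseteq> {a,c}" "\<xi>' c = \<xi> c - 1"
    using ex_adj[OF Suc(3) ab(1) c(1) _ cV] c by auto
  have rest: "\<xi>' i = \<xi> i" if "i \<in> {1..m}-{a,b,c}" for i
    using Dout[of \<xi> \<xi>' "{a,c}" i] xi' that by auto
  have s1: "(\<Sum>i\<in>{1..m}-{a,b}. \<xi> i) = \<xi> c + (\<Sum>i\<in>{1..m}-{a,b}-{c}. \<xi> i)"
    using c by (subst sum.remove[of _ c]) auto
  have s2: "(\<Sum>i\<in>{1..m}-{a,b}. \<xi>' i) = \<xi>' c + (\<Sum>i\<in>{1..m}-{a,b}-{c}. \<xi>' i)"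
    using c by (subst sum.remove[of _ c]) auto
  have s3: "(\<Sum>i\<in>{1..m}-{a,b}-{c}. \<xi>' i) = (\<Sum>i\<in>{1..m}-{a,b}-{c}. \<xi> i)"
    using rest by (intro sum.cong) auto
  have "k = (\<Sum>i\<in>{1..m}-{a,b}. \<xi>' i)" using Suc(2) s1 s2 s3 xi'(3) c(3) by simp
  then have IH: "\<psi> ` lineS \<xi>' {a,b} = lineS (\<psi> \<xi>') {g1,g2}" using Suc(1) xi'(1) by blast
  obtain p q where pq: "p \<in> {1..m}" "q \<in> {1..m}" "p \<noteq> q" "\<psi> ` lineS \<xi> {a,b} = lineS (\<psi> \<xi>) {p,q}"
    using lineA[OF Suc(3) ab] by blast
  have "c \<noteq> a" "c \<noteq> b" using c by auto
  then have "{p,q} = {g1,g2}"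
    using move_psi[OF Suc(3) ab(1,2) c(1) ab(3) _ _ xi'(1,2) _ pq G(1-3) IH] xi'(3) c(3) by auto
  then show ?case using pq(4) by simp
qed

end


lemma comb_sigma:
  fixes f :: "nat \<Rightarrow> nat \<Rightarrow> nat set" and m :: nat
  assumes m4: "m \<ge> 4"
    and sym: "\<And>i j. f i j = f j i"
    and crd: "\<And>i j. i \<in> {1..m} \<Longrightarrow> j \<in> {1..m} \<Longrightarrow> i \<noteq> j \<Longrightarrow> \<exists>p q. p \<noteq> q \<and> p \<in> {1..m} \<and> q \<in> {1..m} \<and> f i j = {p,q}"
    and inj: "\<And>i j k l. i \<in> {1..m} \<Longrightarrow> j \<in> {1..m} \<Longrightarrow> k \<in> {1..m} \<Longrightarrow> l \<in> {1..m} \<Longrightarrow>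
        i \<noteq> j \<Longrightarrow> k \<noteq> l \<Longrightarrow> f i j = f k l \<Longrightarrow> {i,j} = {k,l}"
    and tri: "\<And>i j k. i \<in> {1..m} \<Longrightarrow> j \<in> {1..m} \<Longrightarrow> k \<in> {1..m} \<Longrightarrow> i \<noteq> j \<Longrightarrow> i \<noteq> k \<Longrightarrow> j \<noteq> k \<Longrightarrow>
        \<exists>p q r. f i j = {p,q} \<and> f i k = {p,r} \<and> f j k = {q,r} \<and> p \<noteq> q \<and> p \<noteq> r \<and> q \<noteq> r"
  shows "\<exists>\<sigma>. bij_betw \<sigma> {1..m} {1..m} \<and> (\<forall>i\<in>{1..m}. \<forall>j\<in>{1..m}. i \<noteq> j \<longrightarrow> f i j = {\<sigma> i, \<sigma> j})"
proof -
  let ?M = "{1..m}"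
  have T1: "f i j \<inter> f i k \<noteq> {}" if "i \<in> ?M" "j \<in> ?M" "k \<in> ?M" "i \<noteq> j" "i \<noteq> k" "j \<noteq> k" for i j k
    using tri[OF that] by blast
  have T2: "f i j \<inter> f i k \<inter> f j k = {}" if h: "i \<in> ?M" "j \<in> ?M" "k \<in> ?M" "i \<noteq> j" "i \<noteq> k" "j \<noteq> k" for i j k
  proof -
    obtain p q r where "f i j = {p,q}" "f i k = {p,r}" "f j k = {q,r}" "p \<noteq> q" "p \<noteq> r" "q \<noteq> r"
      using tri[OF h] by blast
    then show ?thesis by auto
  qed
  have ex3: "\<exists>d\<in>?M. d \<notin> S" if "finite S" "card S < m" for S
  proof (rule ccontr)
    assume "\<not> ?thesis"
    then have "?M \<subseteq> S" by auto
    then have "card ?M \<le> card S" using that(1) by (rule card_mono[rotated])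
    then show False using that by simp
  qed
  have avoid: "\<exists>d\<in>?M. d \<notin> {a,b,c}" for a b c
  proof -
    have "card {a,b,c} \<le> 3" by (simp add: card_insert_le_m1)
    then show ?thesis using ex3[of "{a,b,c}"] m4 by simp
  qed
  have exs: "\<exists>e. \<forall>j\<in>?M. j \<noteq> i \<longrightarrow> e \<in> f i j" if i: "i \<in> ?M" for i
  proof -
    obtain j0 where j0: "j0 \<in> ?M" "j0 \<notin> {i,i,i}" using avoid by blast
    obtain k0 where k0: "k0 \<in> ?M" "k0 \<notin> {i,j0,j0}" using avoid by blast
    obtain p q r where pqr: "f i j0 = {p,q}" "f i k0 = {p,r}" "f j0 k0 = {q,r}" "p \<noteq> q" "p \<noteq> r" "q \<noteq> r"
      using tri[OF i j0(1) k0(1)] j0 k0 by auto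
    have "p \<in> f i l" if l: "l \<in> ?M" "l \<noteq> i" for l
    proof (cases "l = j0 \<or> l = k0")
      case True then show ?thesis using pqr by auto
    next
      case False
      show ?thesis
      proof (rule ccontr)
        assume np: "p \<notin> f i l"
        have "f i j0 \<inter> f i l \<noteq> {}" using T1[OF i j0(1) l(1)] j0 l False by auto
        then have q: "q \<in> f i l" using np pqr by auto
        have "f i k0 \<inter> f i l \<noteq> {}" using T1[OF i k0(1) l(1)] k0 l False by auto
        then have r: "r \<in> f i l" using np pqr by auto
        obtain s t where st: "s \<noteq> t" "f i l = {s,t}" using crd[OF i l(1)] l by blast
        have "f i l = {q,r}" using st q r pqr(6) by auto
        then have "f i l = f j0 k0" using pqr by simp
        then have "{i,l} = {j0,k0}" using inj[OF i l(1) j0(1) k0(1)] l k0 by auto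
        then show False using j0 k0 by auto
      qed
    qed
    then show ?thesis by blast
  qed
  define \<sigma> where "\<sigma> i = (SOME e. \<forall>j\<in>?M. j \<noteq> i \<longrightarrow> e \<in> f i j)" for i
  have sig: "\<sigma> i \<in> f i j" if "i \<in> ?M" "j \<in> ?M" "j \<noteq> i" for i j
    using someI_ex[OF exs[OF that(1)]] that by (auto simp: \<sigma>_def)
  have sigM: "\<sigma> i \<in> ?M" if i: "i \<in> ?M" for i
  proof -
    obtain j where j: "j \<in> ?M" "j \<notin> {i,i,i}" using avoid by blast
    obtain p q where "p \<noteq> q" "p \<in> ?M" "q \<in> ?M" "f i j = {p,q}" using crd[OF i j(1)] j by auto
    then show ?thesis using sig[OF i j(1)] j by auto
  qed
  have sinj: "\<sigma> i \<noteq> \<sigma> j" if h: "i \<in> ?M" "j \<in> ?M" "i \<noteq> j" for i j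
  proof
    assume e: "\<sigma> i = \<sigma> j"
    obtain k where k: "k \<in> ?M" "k \<notin> {i,j,j}" using avoid by blast
    have "\<sigma> i \<in> f i j" "\<sigma> i \<in> f i k" using sig h k by auto
    moreover have "\<sigma> i \<in> f j k" using sig[of j k] e h k by auto
    ultimately show False using T2[of i j k] h k by auto
  qed
  have fe: "f i j = {\<sigma> i, \<sigma> j}" if h: "i \<in> ?M" "j \<in> ?M" "i \<noteq> j" for i j
  proof -
    obtain p q where pq: "p \<noteq> q" "f i j = {p,q}" using crd[OF h] by blast
    have "\<sigma> i \<in> f i j" using sig that by auto
    moreover have "\<sigma> j \<in> f i j" using sig[of j i] that sym[of i j] by auto
    ultimately show ?thesis using pq sinj[OF h] by auto
  qed
  have ij: "inj_on \<sigma> ?M" using sinj by (meson inj_onI)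
  have "\<sigma> ` ?M \<subseteq> ?M" using sigM by auto
  moreover have "card (\<sigma> ` ?M) = card ?M" using card_image[OF ij] .
  ultimately have "\<sigma> ` ?M = ?M" by (simp add: card_subset_eq)
  then have "bij_betw \<sigma> ?M ?M" using ij by (simp add: bij_betw_def)
  then show ?thesis using fe by blast
qed

context csr_aut_l begin

definition Xv :: "nat \<Rightarrow> (nat \<Rightarrow> nat)" where
  "Xv j = (if j = 1 then z0 else (SOME y. y \<in> VV \<and> D z0 y \<subseteq> {j,1} \<and> y 1 = 1))"

lemma one_m: "1 \<in> {1..m}" using m3 by simp

lemma Xv_prop:
  assumes j: "j \<in> {1..m}" "j \<noteq> 1"
  shows "Xv j \<in> VV \<and> D z0 (Xv j) = {j,1} \<and> Xv j 1 = 1"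
proof -
  have ex: "\<exists>y. y \<in> VV \<and> D z0 y \<subseteq> {j,1} \<and> y 1 = 1"
    using ex_adj[OF z0V j(1) one_m j(2), of 1] n3 by auto
  have y: "Xv j \<in> VV" "D z0 (Xv j) \<subseteq> {j,1}" "Xv j 1 = 1"
    using someI_ex[OF ex] j by (auto simp: Xv_def)
  have "z0 1 \<noteq> Xv j 1" using y(3) by (simp add: z0_def)
  then have "z0 \<noteq> Xv j" by metis
  then have "D z0 (Xv j) = {j,1}" using det2[OF z0V y(1) j(1) one_m j(2) y(2)] by simp
  then show ?thesis using y by simp
qed

lemma Xv_V: "j \<in> {1..m} \<Longrightarrow> Xv j \<in> VV"
  using Xv_prop[of j] z0V by (cases "j = 1") (auto simp: Xv_def)

lemma Xv_D:
  assumes ij: "i \<in> {1..m}" "j \<in> {1..m}" "i \<noteq> j"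
  shows "D (Xv i) (Xv j) = {i,j}"
proof (cases "i = 1")
  case True
  then show ?thesis using Xv_prop[of j] ij by (auto simp: Xv_def)
next
  case F1: False
  show ?thesis
  proof (cases "j = 1")
    case True
    then show ?thesis using Xv_prop[of i] ij D_sym[of z0 "Xv i"] by (auto simp: Xv_def)
  next
    case False
    have Pi: "D z0 (Xv i) = {i,1}" "Xv i 1 = 1" using Xv_prop[of i] ij F1 by auto
    have Pj: "D z0 (Xv j) = {j,1}" "Xv j 1 = 1" using Xv_prop[of j] ij False by auto
    have "D (Xv i) (Xv j) \<subseteq> {i,1,j}" using D_tri[of "Xv i" "Xv j" z0] D_sym[of "Xv i" z0] Pi Pj by auto
    moreover have "1 \<notin> D (Xv i) (Xv j)" using Pi Pj by (auto simp: D_def)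
    moreover have "i \<in> D (Xv i) (Xv j)"
    proof -
      have "Xv i i \<noteq> z0 i" using Din[of i z0 "Xv i"] Pi by auto
      moreover have "Xv j i = z0 i" using Dout[of z0 "Xv j" "{j,1}" i] Pj ij F1 by auto
      ultimately show ?thesis using DinI[OF ij(1)] by metis
    qed
    moreover have "j \<in> D (Xv i) (Xv j)"
    proof -
      have "Xv j j \<noteq> z0 j" using Din[of j z0 "Xv j"] Pj by auto
      moreover have "Xv i j = z0 j" using Dout[of z0 "Xv i" "{i,1}" j] Pi ij False by auto
      ultimately show ?thesis using DinI[OF ij(2)] by metis
    qed
    ultimately show ?thesis by auto
  qed
qed

definition ff :: "nat \<Rightarrow> nat \<Rightarrow> nat set" where
  "ff i j = D (\<psi> (Xv i)) (\<psi> (Xv j))"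

lemma fG:
  assumes ij: "i \<in> {1..m}" "j \<in> {1..m}" "i \<noteq> j"
    and G: "g1 \<in> {1..m}" "g2 \<in> {1..m}" "g1 \<noteq> g2" "\<psi> ` lineS z0 {i,j} = lineS (\<psi> z0) {g1,g2}"
  shows "ff i j = {g1,g2}"
proof -
  have XV: "Xv i \<in> VV" "Xv j \<in> VV" using Xv_V ij by auto
  have e: "\<psi> ` lineS (Xv i) {i,j} = lineS (\<psi> (Xv i)) {g1,g2}" using const[OF ij G XV(1)] .
  have "Xv j \<in> lineS (Xv i) {i,j}" using Xv_D[OF ij] XV by (simp add: lineS_mem)
  then have "\<psi> (Xv j) \<in> lineS (\<psi> (Xv i)) {g1,g2}" using e by auto
  then have sub: "ff i j \<subseteq> {g1,g2}" by (simp add: lineS_mem ff_def)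
  have "Xv i \<noteq> Xv j" using Xv_D[OF ij] by auto
  then have "\<psi> (Xv i) \<noteq> \<psi> (Xv j)" using inj_eq XV by simp
  then show ?thesis using det2[OF psiV[OF XV(1)] psiV[OF XV(2)] G(1-3)] sub by (simp add: ff_def)
qed

lemma dir_unique:
  assumes ij: "i \<in> {1..m}" "j \<in> {1..m}" "i \<noteq> j" and e: "lineS z0 {i,j} = lineS z0 {k,l}"
  shows "{i,j} = {k,l}"
proof -
  obtain y where y: "y \<in> VV" "D z0 y \<subseteq> {i,j}" "y j = 1"
    using ex_adj[OF z0V ij, of 1] n3 by auto
  have "z0 j \<noteq> y j" using y(3) by (simp add: z0_def)
  then have "z0 \<noteq> y" by metis
  then have "D z0 y = {i,j}" using det2[OF z0V y(1) ij y(2)] by simp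
  moreover have "y \<in> lineS z0 {i,j}" using y by (simp add: lineS_mem)
  then have "y \<in> lineS z0 {k,l}" using e by simp
  ultimately have "{i,j} \<subseteq> {k,l}" by (simp add: lineS_mem)
  then show ?thesis using ij(3) by (rule dbl3)
qed

lemma ffG: "i \<in> {1..m} \<Longrightarrow> j \<in> {1..m} \<Longrightarrow> i \<noteq> j \<Longrightarrow>
   \<exists>g1 g2. g1 \<in> {1..m} \<and> g2 \<in> {1..m} \<and> g1 \<noteq> g2 \<and> \<psi> ` lineS z0 {i,j} = lineS (\<psi> z0) {g1,g2} \<and> ff i j = {g1,g2}"
proof -
  assume ij: "i \<in> {1..m}" "j \<in> {1..m}" "i \<noteq> j"
  obtain g1 g2 where g: "g1 \<in> {1..m}" "g2 \<in> {1..m}" "g1 \<noteq> g2" "\<psi> ` lineS z0 {i,j} = lineS (\<psi> z0) {g1,g2}"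
    using lineA[OF z0V ij] by blast
  have "ff i j = {g1,g2}" using fG[OF ij g] .
  then show ?thesis using g by blast
qed

lemma sigma_ex:
  "\<exists>\<sigma>. bij_betw \<sigma> {1..m} {1..m} \<and> (\<forall>i\<in>{1..m}. \<forall>j\<in>{1..m}. i \<noteq> j \<longrightarrow> ff i j = {\<sigma> i, \<sigma> j})"
proof (rule comb_sigma)
  show "m \<ge> 4" using m3 by simp
  show "ff i j = ff j i" for i j by (simp add: ff_def D_sym)
  show "\<exists>p q. p \<noteq> q \<and> p \<in> {1..m} \<and> q \<in> {1..m} \<and> ff i j = {p,q}"
    if "i \<in> {1..m}" "j \<in> {1..m}" "i \<noteq> j" for i j
    using ffG[OF that] by blast
  show "{i,j} = {k,l}" if h: "i \<in> {1..m}" "j \<in> {1..m}" "k \<in> {1..m}" "l \<in> {1..m}" "i \<noteq> j" "k \<noteq> l" "ff i j = ff k l"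
    for i j k l
  proof -
    obtain g1 g2 where g: "\<psi> ` lineS z0 {i,j} = lineS (\<psi> z0) {g1,g2}" "ff i j = {g1,g2}"
      using ffG[OF h(1,2,5)] by blast
    obtain h1 h2 where hh: "\<psi> ` lineS z0 {k,l} = lineS (\<psi> z0) {h1,h2}" "ff k l = {h1,h2}"
      using ffG[OF h(3,4,6)] by blast
    have "\<psi> ` lineS z0 {i,j} = \<psi> ` lineS z0 {k,l}" using g hh h(7) by simp
    moreover have "lineS z0 {i,j} \<subseteq> VV" "lineS z0 {k,l} \<subseteq> VV" by (auto simp: lineS_mem)
    ultimately have "lineS z0 {i,j} = lineS z0 {k,l}" using inj by (simp add: inj_on_image_eq_iff)
    then show ?thesis using dir_unique h by blast
  qed
  show "\<exists>p q r. ff i j = {p,q} \<and> ff i k = {p,r} \<and> ff j k = {q,r} \<and> p \<noteq> q \<and> p \<noteq> r \<and> q \<noteq> r"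
    if h: "i \<in> {1..m}" "j \<in> {1..m}" "k \<in> {1..m}" "i \<noteq> j" "i \<noteq> k" "j \<noteq> k" for i j k
  proof -
    have XV: "Xv i \<in> VV" "Xv j \<in> VV" "Xv k \<in> VV" using Xv_V h by auto
    have a1: "adj (\<psi> (Xv i)) (\<psi> (Xv j))" using adjp[OF XV(1,2)] Xv_D[of i j] h by simp
    have a2: "adj (\<psi> (Xv i)) (\<psi> (Xv k))" using adjp[OF XV(1,3)] Xv_D[of i k] h by simp
    have a3: "adj (\<psi> (Xv j)) (\<psi> (Xv k))" using adjp[OF XV(2,3)] Xv_D[of j k] h by simp
    have "\<not> (ff i k = ff i j)"
    proof
      assume "ff i k = ff i j"
      obtain g1 g2 where g: "\<psi> ` lineS z0 {i,j} = lineS (\<psi> z0) {g1,g2}" "ff i j = {g1,g2}"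
        using ffG[OF h(1,2,4)] by blast
      obtain h1 h2 where hh: "\<psi> ` lineS z0 {i,k} = lineS (\<psi> z0) {h1,h2}" "ff i k = {h1,h2}"
        using ffG[OF h(1,3,5)] by blast
      have "\<psi> ` lineS z0 {i,j} = \<psi> ` lineS z0 {i,k}" using g hh \<open>ff i k = ff i j\<close> by simp
      moreover have "lineS z0 {i,j} \<subseteq> VV" "lineS z0 {i,k} \<subseteq> VV" by (auto simp: lineS_mem)
      ultimately have "lineS z0 {i,j} = lineS z0 {i,k}" using inj by (simp add: inj_on_image_eq_iff)
      then have "{i,j} = {i,k}" using dir_unique h by blast
      then show False using h by (auto simp: doubleton_eq_iff)
    qed
    then have "\<not> (D (\<psi> (Xv i)) (\<psi> (Xv k)) = D (\<psi> (Xv i)) (\<psi> (Xv j)) \<and> D (\<psi> (Xv j)) (\<psi> (Xv k)) = D (\<psi> (Xv i)) (\<psi> (Xv j)))"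
      unfolding ff_def by blast
    then show ?thesis using tri[OF a1 a2 a3] unfolding ff_def by argo
  qed
qed

lemma main:
  "\<exists>\<sigma>. bij_betw \<sigma> {1..m} {1..m} \<and>
    (\<forall>a\<in>{1..m}. \<forall>b\<in>{1..m}. a \<noteq> b \<longrightarrow>
       (\<lambda>P. \<psi> ` P) ` P_part m n a b = P_part m n (\<sigma> a) (\<sigma> b))"
proof -
  obtain \<sigma> where s: "bij_betw \<sigma> {1..m} {1..m}" "\<forall>i\<in>{1..m}. \<forall>j\<in>{1..m}. i \<noteq> j \<longrightarrow> ff i j = {\<sigma> i, \<sigma> j}"
    using sigma_ex by blast
  have "(\<lambda>P. \<psi> ` P) ` P_part m n a b = P_part m n (\<sigma> a) (\<sigma> b)"
    if ab: "a \<in> {1..m}" "b \<in> {1..m}" "a \<noteq> b" for a b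
  proof -
    have sab: "\<sigma> a \<in> {1..m}" "\<sigma> b \<in> {1..m}" "\<sigma> a \<noteq> \<sigma> b"
      using bij_betw_apply[OF s(1) ab(1)] bij_betw_apply[OF s(1) ab(2)]
        inj_on_contraD[OF bij_betw_imp_inj_on[OF s(1)] ab(3) ab(1,2)] by auto
    obtain g1 g2 where g: "g1 \<in> {1..m}" "g2 \<in> {1..m}" "g1 \<noteq> g2"
      "\<psi> ` lineS z0 {a,b} = lineS (\<psi> z0) {g1,g2}" "ff a b = {g1,g2}"
      using ffG[OF ab] by blast
    have gs: "{g1,g2} = {\<sigma> a, \<sigma> b}" using g(5) s(2) ab by simp
    have L: "\<psi> ` lineS \<xi> {a,b} = lineS (\<psi> \<xi>) {\<sigma> a, \<sigma> b}" if "\<xi> \<in> VV" for \<xi>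
      using const[OF ab g(1-4) that] gs by simp
    have "(\<lambda>P. \<psi> ` P) ` P_part m n a b = (\<lambda>\<xi>. \<psi> ` lineS \<xi> {a,b}) ` VV"
      unfolding P_part_eq[OF ab] by (rule image_image)
    also have "\<dots> = (\<lambda>\<xi>. lineS (\<psi> \<xi>) {\<sigma> a, \<sigma> b}) ` VV" using L by (rule image_cong[OF refl])
    also have "\<dots> = (\<lambda>\<eta>. lineS \<eta> {\<sigma> a, \<sigma> b}) ` (\<psi> ` VV)" by (rule image_image[symmetric])
    also have "\<dots> = P_part m n (\<sigma> a) (\<sigma> b)" by (simp only: img P_part_eq[OF sab])
    finally show ?thesis .
  qed
  then show ?thesis using s(1) by blast
qed

end

theorem lemma5:
  fixes m n :: nat and \<psi> :: "(nat \<Rightarrow> nat) \<Rightarrow> (nat \<Rightarrow> nat)"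
  assumes "n > 3" and "m > 3" and "csr_aut m n \<psi>"
  shows "\<exists>\<sigma>. bij_betw \<sigma> {1..m} {1..m} \<and>
    (\<forall>a\<in>{1..m}. \<forall>b\<in>{1..m}. a \<noteq> b \<longrightarrow>
       (\<lambda>P. \<psi> ` P) ` P_part m n a b = P_part m n (\<sigma> a) (\<sigma> b))"
proof -
  interpret csr_aut_l m n \<psi> using assms by unfold_locales auto
  show ?thesis by (rule main)
qed

end
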